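(* Let $J\in\mathbb T$. If $f\in\mathcal S_T^1(\Omega_D,A)$, then $(\overline\partial_Tf)_J=\overline\partial_Jf_J$ and $(\partial_Tf)_J=\partial_Jf_J$. If moreover $f\in\mathcal S_T^2(\Omega_D,A)$, then $(\Delta_Tf)_J=\Delta_Jf_J$. Here $g_J$ denotes the restriction of $g$ to $(\Omega_D)_J=\Omega_D\cap\mathbb R_J$.
   Context: $A$ is a finite-dimensional associative real algebra with unit and a $*$-involution $x\mapsto x^c$; $\mathbb S_A=\{x:x+x^c=0,xx^c=1\}\ne\emptyset$. $V\subseteq A$ has basis $(v_0=1,v_1,\dots,v_N)$, $N\ge1$, $v_s\in\mathbb S_A$ pairwise anticommuting for $s\ge1$, $V\subseteq\bigcup_{J\in\mathbb S_A}(\mathbb R+J\mathbb R)$, and $A$ carries the Euclidean norm making a completion of this basis orthonormal. $\mathbb R_{\ell,m}=\mathrm{Span}_{\mathbb R}(v_\ell,\dots,v_m)$, $\mathbb S_{\ell,m}$ its unit sphere. $T=(t_0,\dots,t_\tau)$, $0\le t_0<\dots<t_\tau=N$, torus $\mathbb T=\mathbb S_{t_0+1,t_1}\times\cdots\times\mathbb S_{t_{\tau-1}+1,t_\tau}$ (for $\tau=0$, single index $J=\emptyset$). For $J\in\mathbb T$, $\beta\in\mathbb R^\tau$: $\beta J=\sum\beta_hJ_h$; $J_\emptyset=1$, $J_K=J_{k_1}\cdots J_{k_p}$ for $K=\{k_1<\dots<k_p\}$; $\overline\beta^h$ flips the sign of $\beta_h$; $\sigma(h,K)$ is the parity of $\#\{k\in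 K:k\le h\}$. $D\subseteq\mathbb R_{0,t_0}\times\mathbb R^\tau$ open, invariant under $(\alpha,\beta)\mapsto(\alpha,\overline\beta^h)$; $\Omega_D=\{\alpha+\beta J\}$ open. $T$-stem functions $F=\sum_KE_KF_K:D\to A\otimes\mathbb R^{2^\tau}$ satisfy $F_K(\alpha,\overline\beta^h)=F_K(\alpha,\beta)$ if $h\notin K$, $-F_K(\alpha,\beta)$ if $h\in K$, and induce $\mathcal I(F)(\alpha+\beta J)=\sum_KJ_KF_K(\alpha,\beta)$ ($\mathcal I$ injective); $\mathcal S^p_T(\Omega_D,A)$ is the image of stems with $C^p$ components. Slice operators: $\mathbb R_J=\mathrm{Span}(v_0,\dots,v_{t_0},J_1,\dots,J_\tau)$; on $C^1$ functions on open subsets of $\mathbb R_J$, $\partial_s$ ($s\le t_0$) and $\partial_{t_0+u}$ ($1\le u\le\tau$) are directional derivatives along $v_s$ and $J_u$; $\overline\partial_J=\sum_{s=0}^{t_0}v_s\partial_s+\sum_uJ_u\partial_{t_0+u}$, $\partial_J=\partial_0-\sum_{s=1}^{t_0}v_s\partial_s-\sum_uJ_u\partial_{t_0+u}$, $\Delta_J=\sum_{s=0}^{t_0+\tau}\partial_s^2$. Global operators: with $\alpha=\sum_{s=0}^{t_0}x_sv_s$, $\partial_{\alpha_s},\partial_{\beta_h}$ partial derivatives on $D$; $\overline\partial_\alpha=\partial_{\alpha_0}+\sum_{s\ge1}v_s\partial_{\alpha_s}$, $\partial_\alpha=\partial_{\alpha_0}-\sum_{s\ge1}v_s\partial_{\alpha_s}$,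 $\overline\partial^u_\alpha=\partial_{\alpha_0}-(-1)^u\sum_{s=1}^{t_0}v_s\partial_{\alpha_s}$; $(\overline\partial_TF)_K=\overline\partial^{|K|+1}_\alpha F_K+\sum_h(-1)^{\sigma(h,K)+1}\partial_{\beta_h}F_{K\triangle\{h\}}$, $(\partial_TF)_K=\overline\partial^{|K|}_\alpha F_K+\sum_h(-1)^{\sigma(h,K)}\partial_{\beta_h}F_{K\triangle\{h\}}$, $(\Delta_TF)_K=\partial_\alpha\overline\partial_\alpha F_K+\sum_h\partial^2_{\beta_h}F_K$; on $T$-functions, $\overline\partial_T\mathcal I(F)=\mathcal I(\overline\partial_TF)$, $\partial_T\mathcal I(F)=\mathcal I(\partial_TF)$, $\Delta_T\mathcal I(F)=\mathcal I(\Delta_TF)$. *)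

theory Defs
  imports "HOL-Analysis.Analysis"
begin

text \<open>Points of the stem domain D are pairs (alpha, beta) with alpha in R_{0,t_0} (a subset of A)
 and beta :: nat => real, where only beta 1, ..., beta tau are meaningful
 (the others are required to vanish on D).\<close>

definition star_involution :: "('a::real_algebra_1 \<Rightarrow> 'a) \<Rightarrow> bool" where
  "star_involution cj \<longleftrightarrow> linear cj \<and> (\<forall>x y. cj (x * y) = cj y * cj x) \<and> (\<forall>x. cj (cj x) = x)"

definition SA :: "('a::real_algebra_1 \<Rightarrow> 'a) \<Rightarrow> 'a set" where
  "SA cj = {x. x + cj x = 0 \<and> x * cj x = 1}"

definition sphere_span :: "(nat \<Rightarrow> 'a::real_normed_vector) \<Rightarrow> nat \<Rightarrow> nat \<Rightarrow> 'a set" where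
  "sphere_span v l m = {x \<in> span (v ` {l..m}). norm x = 1}"

text \<open>The torus; J h is meaningful for h in {1..tau}.\<close>
definition torus :: "(nat \<Rightarrow> 'a::real_normed_vector) \<Rightarrow> (nat \<Rightarrow> nat) \<Rightarrow> nat \<Rightarrow> (nat \<Rightarrow> 'a) set" where
  "torus v t \<tau> = {J. \<forall>h\<in>{1..\<tau>}. J h \<in> sphere_span v (Suc (t (h - 1))) (t h)}"

definition JK :: "(nat \<Rightarrow> 'a::monoid_mult) \<Rightarrow> nat set \<Rightarrow> 'a" where
  "JK J K = prod_list (map J (sorted_list_of_set K))"

definition tpoint :: "(nat \<Rightarrow> 'a::real_vector) \<Rightarrow> nat \<Rightarrow> 'a \<times> (nat \<Rightarrow> real) \<Rightarrow> 'a" where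
  "tpoint J \<tau> p = fst p + (\<Sum>h\<in>{1..\<tau>}. snd p h *\<^sub>R J h)"

definition OmegaD :: "(nat \<Rightarrow> 'a::real_normed_vector) \<Rightarrow> (nat \<Rightarrow> nat) \<Rightarrow> nat \<Rightarrow> ('a \<times> (nat \<Rightarrow> real)) set \<Rightarrow> 'a set" where
  "OmegaD v t \<tau> D = {tpoint J \<tau> p | p J. p \<in> D \<and> J \<in> torus v t \<tau>}"

definition RJ :: "(nat \<Rightarrow> 'a::real_vector) \<Rightarrow> nat \<Rightarrow> nat \<Rightarrow> (nat \<Rightarrow> 'a) \<Rightarrow> 'a set" where
  "RJ v t0 \<tau> J = span (v ` {0..t0} \<union> J ` {1..\<tau>})"

definition induced :: "(nat \<Rightarrow> 'a::{real_normed_vector,real_algebra_1}) \<Rightarrow> (nat \<Rightarrow> nat) \<Rightarrow> nat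
    \<Rightarrow> ('a \<times> (nat \<Rightarrow> real)) set \<Rightarrow> (nat set \<Rightarrow> 'a \<times> (nat \<Rightarrow> real) \<Rightarrow> 'a) \<Rightarrow> 'a \<Rightarrow> 'a" where
  "induced v t \<tau> D F x = (SOME y. \<exists>p\<in>D. \<exists>J\<in>torus v t \<tau>.
       x = tpoint J \<tau> p \<and> y = (\<Sum>K\<in>Pow {1..\<tau>}. JK J K * F K p))"

definition T_domain :: "(nat \<Rightarrow> 'a::real_normed_vector) \<Rightarrow> nat \<Rightarrow> nat \<Rightarrow> ('a \<times> (nat \<Rightarrow> real)) set \<Rightarrow> bool" where
  "T_domain v t0 \<tau> D \<longleftrightarrow>
     openin (top_of_set (span (v ` {0..t0}) \<times> {\<beta>. \<forall>h. h \<notin> {1..\<tau>} \<longrightarrow> \<beta> h = 0})) D \<and>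
     (\<forall>p\<in>D. \<forall>h\<in>{1..\<tau>}. (fst p, (snd p)(h := - snd p h)) \<in> D)"

definition T_stem :: "nat \<Rightarrow> ('a \<times> (nat \<Rightarrow> real)) set \<Rightarrow> (nat set \<Rightarrow> 'a \<times> (nat \<Rightarrow> real) \<Rightarrow> 'a::real_vector) \<Rightarrow> bool" where
  "T_stem \<tau> D F \<longleftrightarrow> (\<forall>K. K \<subseteq> {1..\<tau>} \<longrightarrow> (\<forall>p\<in>D. \<forall>h\<in>{1..\<tau>}.
      F K (fst p, (snd p)(h := - snd p h)) = (if h \<in> K then - F K p else F K p)))"

definition pd_alpha :: "'a::real_normed_vector \<Rightarrow> ('a \<times> (nat \<Rightarrow> real) \<Rightarrow> 'b::real_normed_vector) \<Rightarrow> 'a \<times> (nat \<Rightarrow> real) \<Rightarrow> 'b" where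
  "pd_alpha w G p = vector_derivative (\<lambda>r. G (fst p + r *\<^sub>R w, snd p)) (at 0)"

definition pd_beta :: "nat \<Rightarrow> ('a \<times> (nat \<Rightarrow> real) \<Rightarrow> 'b::real_normed_vector) \<Rightarrow> 'a \<times> (nat \<Rightarrow> real) \<Rightarrow> 'b" where
  "pd_beta h G p = vector_derivative (\<lambda>r. G (fst p, (snd p)(h := snd p h + r))) (at 0)"

definition C1_on :: "(nat \<Rightarrow> 'a::real_normed_vector) \<Rightarrow> nat \<Rightarrow> nat \<Rightarrow> ('a \<times> (nat \<Rightarrow> real)) set
    \<Rightarrow> ('a \<times> (nat \<Rightarrow> real) \<Rightarrow> 'b::real_normed_vector) \<Rightarrow> bool" where
  "C1_on v t0 \<tau> D G \<longleftrightarrow> continuous_on D G \<and>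
     (\<forall>s\<le>t0. (\<forall>p\<in>D. (\<lambda>r. G (fst p + r *\<^sub>R v s, snd p)) differentiable (at 0)) \<and>
              continuous_on D (pd_alpha (v s) G)) \<and>
     (\<forall>h\<in>{1..\<tau>}. (\<forall>p\<in>D. (\<lambda>r. G (fst p, (snd p)(h := snd p h + r))) differentiable (at 0)) \<and>
              continuous_on D (pd_beta h G))"

definition C2_on :: "(nat \<Rightarrow> 'a::real_normed_vector) \<Rightarrow> nat \<Rightarrow> nat \<Rightarrow> ('a \<times> (nat \<Rightarrow> real)) set
    \<Rightarrow> ('a \<times> (nat \<Rightarrow> real) \<Rightarrow> 'b::real_normed_vector) \<Rightarrow> bool" where
  "C2_on v t0 \<tau> D G \<longleftrightarrow> C1_on v t0 \<tau> D G \<and>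
     (\<forall>s\<le>t0. C1_on v t0 \<tau> D (pd_alpha (v s) G)) \<and>
     (\<forall>h\<in>{1..\<tau>}. C1_on v t0 \<tau> D (pd_beta h G))"

text \<open>Global operators.  dbar_alpha u = d_{alpha_0} - (-1)^u sum_{s=1}^{t_0} v_s d_{alpha_s};
  dbar_alpha 1 is the operator dbar_alpha and dbar_alpha 0 is d_alpha.\<close>
definition dbar_alpha :: "(nat \<Rightarrow> 'a::{real_normed_vector,real_algebra_1}) \<Rightarrow> nat \<Rightarrow> nat
    \<Rightarrow> ('a \<times> (nat \<Rightarrow> real) \<Rightarrow> 'a) \<Rightarrow> 'a \<times> (nat \<Rightarrow> real) \<Rightarrow> 'a" where
  "dbar_alpha v t0 u G p = pd_alpha (v 0) G p - ((-1::real) ^ u) *\<^sub>R (\<Sum>s\<in>{1..t0}. v s * pd_alpha (v s) G p)"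

definition sigma_par :: "nat \<Rightarrow> nat set \<Rightarrow> nat" where
  "sigma_par h K = card {k\<in>K. k \<le> h}"

definition symd :: "nat set \<Rightarrow> nat \<Rightarrow> nat set" where
  "symd K h = (if h \<in> K then K - {h} else insert h K)"

definition dbarT :: "(nat \<Rightarrow> 'a::{real_normed_vector,real_algebra_1}) \<Rightarrow> nat \<Rightarrow> nat
    \<Rightarrow> (nat set \<Rightarrow> 'a \<times> (nat \<Rightarrow> real) \<Rightarrow> 'a) \<Rightarrow> nat set \<Rightarrow> 'a \<times> (nat \<Rightarrow> real) \<Rightarrow> 'a" where
  "dbarT v t0 \<tau> F K p = dbar_alpha v t0 (card K + 1) (F K) p +
     (\<Sum>h\<in>{1..\<tau>}. ((-1::real) ^ (sigma_par h K + 1)) *\<^sub>R pd_beta h (F (symd K h)) p)"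

definition dT :: "(nat \<Rightarrow> 'a::{real_normed_vector,real_algebra_1}) \<Rightarrow> nat \<Rightarrow> nat
    \<Rightarrow> (nat set \<Rightarrow> 'a \<times> (nat \<Rightarrow> real) \<Rightarrow> 'a) \<Rightarrow> nat set \<Rightarrow> 'a \<times> (nat \<Rightarrow> real) \<Rightarrow> 'a" where
  "dT v t0 \<tau> F K p = dbar_alpha v t0 (card K) (F K) p +
     (\<Sum>h\<in>{1..\<tau>}. ((-1::real) ^ sigma_par h K) *\<^sub>R pd_beta h (F (symd K h)) p)"

definition LapT :: "(nat \<Rightarrow> 'a::{real_normed_vector,real_algebra_1}) \<Rightarrow> nat \<Rightarrow> nat
    \<Rightarrow> (nat set \<Rightarrow> 'a \<times> (nat \<Rightarrow> real) \<Rightarrow> 'a) \<Rightarrow> nat set \<Rightarrow> 'a \<times> (nat \<Rightarrow> real) \<Rightarrow> 'a" where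
  "LapT v t0 \<tau> F K p = dbar_alpha v t0 0 (dbar_alpha v t0 1 (F K)) p +
     (\<Sum>h\<in>{1..\<tau>}. pd_beta h (pd_beta h (F K)) p)"

definition sd :: "'a::real_normed_vector \<Rightarrow> ('a \<Rightarrow> 'b::real_normed_vector) \<Rightarrow> 'a \<Rightarrow> 'b" where
  "sd w f y = vector_derivative (\<lambda>r. f (y + r *\<^sub>R w)) (at 0)"

definition wJ :: "(nat \<Rightarrow> 'a) \<Rightarrow> nat \<Rightarrow> (nat \<Rightarrow> 'a) \<Rightarrow> nat \<Rightarrow> 'a" where
  "wJ v t0 J i = (if i \<le> t0 then v i else J (i - t0))"

definition dbarJ :: "(nat \<Rightarrow> 'a::{real_normed_vector,real_algebra_1}) \<Rightarrow> nat \<Rightarrow> nat \<Rightarrow> (nat \<Rightarrow> 'a) \<Rightarrow> ('a \<Rightarrow> 'a) \<Rightarrow> 'a \<Rightarrow> 'a" where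
  "dbarJ v t0 \<tau> J f y = (\<Sum>s\<in>{0..t0}. v s * sd (v s) f y) + (\<Sum>u\<in>{1..\<tau>}. J u * sd (J u) f y)"

definition dJ :: "(nat \<Rightarrow> 'a::{real_normed_vector,real_algebra_1}) \<Rightarrow> nat \<Rightarrow> nat \<Rightarrow> (nat \<Rightarrow> 'a) \<Rightarrow> ('a \<Rightarrow> 'a) \<Rightarrow> 'a \<Rightarrow> 'a" where
  "dJ v t0 \<tau> J f y = sd (v 0) f y - (\<Sum>s\<in>{1..t0}. v s * sd (v s) f y) - (\<Sum>u\<in>{1..\<tau>}. J u * sd (J u) f y)"

definition LapJ :: "(nat \<Rightarrow> 'a::{real_normed_vector,real_algebra_1}) \<Rightarrow> nat \<Rightarrow> nat \<Rightarrow> (nat \<Rightarrow> 'a) \<Rightarrow> ('a \<Rightarrow> 'a) \<Rightarrow> 'a \<Rightarrow> 'a" where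
  "LapJ v t0 \<tau> J f y = (\<Sum>i\<in>{0..t0 + \<tau>}. sd (wJ v t0 J i) (sd (wJ v t0 J i) f) y)"

end

theory Submission
  imports Defs
begin

lemma JK_union:
  assumes "finite A" "finite B" "\<forall>a\<in>A. \<forall>b\<in>B. a < b"
  shows "JK J (A \<union> B) = JK J A * JK J B"
proof -
  have dis: "A \<inter> B = {}" using assms(3) by auto
  have "sorted_list_of_set (A \<union> B) = sorted_list_of_set A @ sorted_list_of_set B"
    using assms dis by (subst sorted_list_of_set_unique[symmetric]) (auto simp: sorted_wrt_append card_Un_disjoint)
  then show ?thesis unfolding JK_def by simp
qed

lemma JK_anti_list:
  fixes x :: "'a::ring_1"
  assumes "\<forall>h\<in>set xs. x * J h = - (J h * x)"
  shows "x * prod_list (map J xs) = (-1) ^ length xs * (prod_list (map J xs) * x)"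
  using assms
proof (induction xs)
  case Nil then show ?case by simp
next
  case (Cons a xs)
  have "x * prod_list (map J (a # xs)) = (x * J a) * prod_list (map J xs)" by (simp add: mult.assoc)
  also have "\<dots> = - (J a * (x * prod_list (map J xs)))" using Cons.prems by (simp add: mult.assoc)
  also have "\<dots> = - (J a * ((-1) ^ length xs * (prod_list (map J xs) * x)))" using Cons by simp
  also have "\<dots> = (-1) ^ length (a # xs) * (prod_list (map J (a # xs)) * x)"
    by (cases "even (length xs)") (auto simp: mult.assoc)
  finally show ?case .
qed

lemma JK_anti:
  fixes x :: "'a::ring_1"
  assumes "finite K" "\<forall>h\<in>K. x * J h = - (J h * x)"
  shows "x * JK J K = (-1) ^ card K * (JK J K * x)"
  using JK_anti_list[of "sorted_list_of_set K" x J] assms unfolding JK_def by simp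

lemma JK_scale_list:
  fixes J J' :: "nat \<Rightarrow> 'a::real_algebra_1"
  assumes "\<forall>h\<in>set xs. J' h = c h *\<^sub>R J h"
  shows "prod_list (map J' xs) = prod_list (map c xs) *\<^sub>R prod_list (map J xs)"
  using assms by (induction xs) auto

lemma JK_scale:
  fixes J J' :: "nat \<Rightarrow> 'a::real_algebra_1"
  assumes "finite K" "\<forall>h\<in>K. J' h = c h *\<^sub>R J h"
  shows "JK J' K = prod c K *\<^sub>R JK J K"
proof -
  have "prod_list (map c (sorted_list_of_set K)) = prod c K"
    using prod.distinct_set_conv_list[of "sorted_list_of_set K" c] assms by simp
  then show ?thesis using JK_scale_list[of "sorted_list_of_set K" J' c J] assms
    unfolding JK_def by simp
qed

lemma JK_single: "JK J {u} = J u" by (simp add: JK_def)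
lemma JK_empty: "JK J {} = 1" by (simp add: JK_def)

definition flp :: "nat set \<Rightarrow> (nat \<Rightarrow> real) \<Rightarrow> nat \<Rightarrow> real" where
  "flp S \<beta> = (\<lambda>h. if h \<in> S then - \<beta> h else \<beta> h)"

lemma flp_empty[simp]: "flp {} \<beta> = \<beta>" by (simp add: flp_def)

lemma flp_insert: "a \<notin> S \<Longrightarrow> flp (insert a S) \<beta> = (flp S \<beta>)(a := - flp S \<beta> a)"
  by (auto simp: flp_def)

lemma self_neg_zero: "(x::'a::real_vector) = - x \<Longrightarrow> x = 0"
proof -
  assume "x = - x"
  then have "x + x = 0" by (metis add.right_inverse)
  then have "2 *\<^sub>R x = 0" by (simp add: scaleR_2)
  then show ?thesis by simp
qed

lemma lmult_vd:
  fixes a :: "'a::{real_algebra_1, euclidean_space}"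
  assumes "(f has_vector_derivative f') F"
  shows "((\<lambda>r. a * f r) has_vector_derivative a * f') F"
proof -
  have "linear (\<lambda>x. a * x)" by (rule linearI) (auto simp: distrib_left)
  then have "bounded_linear (\<lambda>x. a * x)" by (simp add: linear_conv_bounded_linear)
  then show ?thesis using bounded_linear.has_vector_derivative[OF _ assms] by blast
qed

lemma diff_lmult:
  fixes a :: "'a::{real_algebra_1, euclidean_space}" and f :: "real \<Rightarrow> 'a" and x :: real
  assumes "f differentiable (at x)"
  shows "(\<lambda>r. a * f r) differentiable (at x)"
  using lmult_vd[of f _ "at x" a] assms vector_derivative_works differentiableI_vector by blast

lemma diff_scale:
  fixes f :: "real \<Rightarrow> 'a::real_normed_vector"
  assumes "f differentiable (at x)"
  shows "(\<lambda>r. c *\<^sub>R f r) differentiable (at x)"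
proof -
  have "bounded_linear (\<lambda>y::'a. c *\<^sub>R y)" by (rule bounded_linear_scaleR_right)
  then show ?thesis using bounded_linear.has_vector_derivative assms vector_derivative_works differentiableI_vector by blast
qed

lemma symd_symd: "symd (symd K h) h = K"
  unfolding symd_def by auto

lemma vd_scaleR_id: "((\<lambda>x::real. x *\<^sub>R (c::'b::real_normed_vector)) has_vector_derivative c) F"
  using bounded_linear.has_vector_derivative[OF bounded_linear_scaleR_left has_vector_derivative_id, of c F]
  by simp

lemma bound0:
  fixes f :: "real \<Rightarrow> 'b::real_normed_vector"
  assumes d: "\<forall>x\<in>S. (f has_vector_derivative f' x) (at x within S)"
    and seg: "closed_segment a b \<subseteq> S" and bnd: "\<forall>x\<in>S. norm (f' x - c) \<le> B"
  shows "norm (f b - f a - (b - a) *\<^sub>R c) \<le> 3 * B * \<bar>b - a\<bar>"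
proof -
  define g where "g x = f x - x *\<^sub>R c" for x
  have aS: "a \<in> S" using seg by auto
  have dg: "(g has_vector_derivative (f' x - c)) (at x within S)" if "x \<in> S" for x
    unfolding g_def using d that by (intro has_vector_derivative_diff vd_scaleR_id) auto
  have B2: "norm ((f' x - c) - (f' a - c)) \<le> 2 * B" if "x \<in> S" for x
  proof -
    have "norm ((f' x - c) - (f' a - c)) \<le> norm (f' x - c) + norm (f' a - c)" by (rule norm_triangle_ineq4)
    also have "\<dots> \<le> 2 * B"
    proof -
      have "norm (f' x - c) \<le> B" "norm (f' a - c) \<le> B" using bnd that aS by auto
      then show ?thesis by linarith
    qed
    finally show ?thesis .
  qed
  have L: "norm (g b - g a - (b - a) *\<^sub>R (f' a - c)) \<le> norm (b - a) * (2 * B)"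
    by (rule vector_differentiable_bound_linearization[OF dg seg B2 aS])
  have "norm (g b - g a) \<le> norm (g b - g a - (b - a) *\<^sub>R (f' a - c)) + norm ((b - a) *\<^sub>R (f' a - c))"
    by (metis add.commute norm_triangle_sub)
  also have "\<dots> \<le> \<bar>b - a\<bar> * (2 * B) + \<bar>b - a\<bar> * B"
    using L bnd aS by (intro add_mono) (auto intro: mult_left_mono)
  finally have "norm (g b - g a) \<le> 3 * B * \<bar>b - a\<bar>" by (simp add: algebra_simps)
  moreover have "g b - g a = f b - f a - (b - a) *\<^sub>R c" unfolding g_def by (simp add: algebra_simps)
  ultimately show ?thesis by simp
qed

lemma schwarz_core:
  fixes \<phi> \<phi>x \<phi>y \<phi>xy \<phi>yx :: "real \<Rightarrow> real \<Rightarrow> 'b::real_normed_vector"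
  assumes e: "e > 0"
    and dx: "\<And>x y. \<bar>x\<bar> < e \<Longrightarrow> \<bar>y\<bar> < e \<Longrightarrow> ((\<lambda>r. \<phi> r y) has_vector_derivative \<phi>x x y) (at x)"
    and dxy: "\<And>x y. \<bar>x\<bar> < e \<Longrightarrow> \<bar>y\<bar> < e \<Longrightarrow> ((\<lambda>r. \<phi>x x r) has_vector_derivative \<phi>xy x y) (at y)"
    and dy: "\<And>x y. \<bar>x\<bar> < e \<Longrightarrow> \<bar>y\<bar> < e \<Longrightarrow> ((\<lambda>r. \<phi> x r) has_vector_derivative \<phi>y x y) (at y)"
    and dyx: "\<And>x y. \<bar>x\<bar> < e \<Longrightarrow> \<bar>y\<bar> < e \<Longrightarrow> ((\<lambda>r. \<phi>y r y) has_vector_derivative \<phi>yx x y) (at x)"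
    and c1: "\<And>\<epsilon>. \<epsilon> > 0 \<Longrightarrow> \<exists>\<delta>>0. \<forall>x y. \<bar>x\<bar> < \<delta> \<longrightarrow> \<bar>y\<bar> < \<delta> \<longrightarrow> norm (\<phi>xy x y - \<phi>xy 0 0) \<le> \<epsilon>"
    and c2: "\<And>\<epsilon>. \<epsilon> > 0 \<Longrightarrow> \<exists>\<delta>>0. \<forall>x y. \<bar>x\<bar> < \<delta> \<longrightarrow> \<bar>y\<bar> < \<delta> \<longrightarrow> norm (\<phi>yx x y - \<phi>yx 0 0) \<le> \<epsilon>"
  shows "\<phi>xy 0 0 = \<phi>yx 0 0"
proof -
  let ?C = "\<phi>xy 0 0" and ?C' = "\<phi>yx 0 0"
  have main: "norm (?C - ?C') \<le> 18 * \<epsilon>" if ep: "\<epsilon> > 0" for \<epsilon>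
  proof -
    obtain \<delta>1 where d1: "\<delta>1 > 0" "\<forall>x y. \<bar>x\<bar> < \<delta>1 \<longrightarrow> \<bar>y\<bar> < \<delta>1 \<longrightarrow> norm (\<phi>xy x y - ?C) \<le> \<epsilon>"
      using c1[OF ep] by blast
    obtain \<delta>2 where d2: "\<delta>2 > 0" "\<forall>x y. \<bar>x\<bar> < \<delta>2 \<longrightarrow> \<bar>y\<bar> < \<delta>2 \<longrightarrow> norm (\<phi>yx x y - ?C') \<le> \<epsilon>"
      using c2[OF ep] by blast
    define d where "d = min (min \<delta>1 \<delta>2) e"
    define h where "h = d / 2"
    have d0: "d > 0" using d1 d2 e unfolding d_def by auto
    have h0: "h > 0" "h < d" using d0 unfolding h_def by auto
    have he: "\<bar>h\<bar> < e" "\<bar>0::real\<bar> < e" using h0 e unfolding d_def by auto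
    define S where "S = {x::real. \<bar>x\<bar> < d}"
    have Sopen: "open S" unfolding S_def by (rule open_Collect_less) (auto intro!: continuous_intros)
    have inS: "x \<in> S \<Longrightarrow> \<bar>x\<bar> < e \<and> \<bar>x\<bar> < \<delta>1 \<and> \<bar>x\<bar> < \<delta>2" for x
      unfolding S_def d_def by auto
    have seg: "closed_segment 0 h \<subseteq> S" using h0 unfolding S_def by (auto simp: closed_segment_eq_real_ivl)
    have w: "(f has_vector_derivative f') (at x within S)" if "(f has_vector_derivative f') (at x)" for f f' x
      using that by (rule has_vector_derivative_at_within)
    have inner1: "norm (\<phi>x x h - \<phi>x x 0 - h *\<^sub>R ?C) \<le> 3 * \<epsilon> * h" if x: "x \<in> S" for x
    proof -
      have D1: "\<forall>y\<in>S. ((\<phi>x x) has_vector_derivative \<phi>xy x y) (at y within S)"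
      proof
        fix y assume y: "y \<in> S"
        show "((\<phi>x x) has_vector_derivative \<phi>xy x y) (at y within S)"
          using w[OF dxy] inS[OF x] inS[OF y] by blast
      qed
      have B1: "\<forall>y\<in>S. norm (\<phi>xy x y - ?C) \<le> \<epsilon>" using d1 inS[OF x] inS by blast
      show ?thesis using bound0[OF D1 seg B1] h0 by simp
    qed
    have inner2: "norm (\<phi>y h y - \<phi>y 0 y - h *\<^sub>R ?C') \<le> 3 * \<epsilon> * h" if y: "y \<in> S" for y
    proof -
      have D1: "\<forall>x\<in>S. ((\<lambda>r. \<phi>y r y) has_vector_derivative \<phi>yx x y) (at x within S)"
      proof
        fix x assume x: "x \<in> S"
        show "((\<lambda>r. \<phi>y r y) has_vector_derivative \<phi>yx x y) (at x within S)"
          using w[OF dyx] inS[OF x] inS[OF y] by blast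
      qed
      have B1: "\<forall>x\<in>S. norm (\<phi>yx x y - ?C') \<le> \<epsilon>" using d2 inS[OF y] inS by blast
      show ?thesis using bound0[OF D1 seg B1] h0 by simp
    qed
    have U: "norm ((\<phi> h h - \<phi> h 0) - (\<phi> 0 h - \<phi> 0 0) - h *\<^sub>R (h *\<^sub>R ?C)) \<le> 3 * (3 * \<epsilon> * h) * h"
    proof -
      have "norm ((\<lambda>r. \<phi> r h - \<phi> r 0) h - (\<lambda>r. \<phi> r h - \<phi> r 0) 0 - (h - 0) *\<^sub>R (h *\<^sub>R ?C)) \<le> 3 * (3 * \<epsilon> * h) * \<bar>h - 0\<bar>"
      proof (rule bound0[OF _ seg])
        show "\<forall>x\<in>S. ((\<lambda>r. \<phi> r h - \<phi> r 0) has_vector_derivative (\<phi>x x h - \<phi>x x 0)) (at x within S)"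
          using inS dx he by (auto intro!: w has_vector_derivative_diff)
        show "\<forall>x\<in>S. norm ((\<phi>x x h - \<phi>x x 0) - h *\<^sub>R ?C) \<le> 3 * \<epsilon> * h"
          using inner1 by (simp add: algebra_simps)
      qed
      then show ?thesis using h0 by simp
    qed
    have V: "norm ((\<phi> h h - \<phi> 0 h) - (\<phi> h 0 - \<phi> 0 0) - h *\<^sub>R (h *\<^sub>R ?C')) \<le> 3 * (3 * \<epsilon> * h) * h"
    proof -
      have "norm ((\<lambda>r. \<phi> h r - \<phi> 0 r) h - (\<lambda>r. \<phi> h r - \<phi> 0 r) 0 - (h - 0) *\<^sub>R (h *\<^sub>R ?C')) \<le> 3 * (3 * \<epsilon> * h) * \<bar>h - 0\<bar>"
      proof (rule bound0[OF _ seg])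
        show "\<forall>y\<in>S. ((\<lambda>r. \<phi> h r - \<phi> 0 r) has_vector_derivative (\<phi>y h y - \<phi>y 0 y)) (at y within S)"
          using inS dy he by (auto intro!: w has_vector_derivative_diff)
        show "\<forall>y\<in>S. norm ((\<phi>y h y - \<phi>y 0 y) - h *\<^sub>R ?C') \<le> 3 * \<epsilon> * h"
          using inner2 by (simp add: algebra_simps)
      qed
      then show ?thesis using h0 by simp
    qed
    have "norm ((h * h) *\<^sub>R (?C - ?C')) = norm (((\<phi> h h - \<phi> 0 h) - (\<phi> h 0 - \<phi> 0 0) - h *\<^sub>R (h *\<^sub>R ?C'))
         - ((\<phi> h h - \<phi> h 0) - (\<phi> 0 h - \<phi> 0 0) - h *\<^sub>R (h *\<^sub>R ?C)))"
      by (simp add: algebra_simps)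
    also have "\<dots> \<le> norm ((\<phi> h h - \<phi> 0 h) - (\<phi> h 0 - \<phi> 0 0) - h *\<^sub>R (h *\<^sub>R ?C'))
         + norm ((\<phi> h h - \<phi> h 0) - (\<phi> 0 h - \<phi> 0 0) - h *\<^sub>R (h *\<^sub>R ?C))"
      by (rule norm_triangle_ineq4)
    also have "\<dots> \<le> 3 * (3 * \<epsilon> * h) * h + 3 * (3 * \<epsilon> * h) * h"
      by (rule add_mono[OF V U])
    finally have X: "norm ((h * h) *\<^sub>R (?C - ?C')) \<le> 3 * (3 * \<epsilon> * h) * h + 3 * (3 * \<epsilon> * h) * h" .
    have e1: "3 * (3 * \<epsilon> * h) * h + 3 * (3 * \<epsilon> * h) * h = (h * h) * (18 * \<epsilon>)" by (simp add: algebra_simps)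
    have e2: "norm ((h * h) *\<^sub>R (?C - ?C')) = (h * h) * norm (?C - ?C')" using h0 by simp
    have "(h * h) * norm (?C - ?C') \<le> (h * h) * (18 * \<epsilon>)" using X e1 e2 by linarith
    then show ?thesis using h0 by (simp add: mult_le_cancel_left_pos)
  qed
  show ?thesis
  proof (rule ccontr)
    assume "?C \<noteq> ?C'"
    then have "norm (?C - ?C') > 0" by simp
    then have "norm (?C - ?C') \<le> 18 * (norm (?C - ?C') / 36)" using main[of "norm (?C - ?C') / 36"] by simp
    then show False using \<open>norm (?C - ?C') > 0\<close> by simp
  qed
qed

lemma vd_shift:
  assumes "((\<lambda>r. f (x + r)) has_vector_derivative f') (at 0)"
  shows "(f has_vector_derivative f') (at x)"
proof -
  have d1: "((\<lambda>r. r - x) has_vector_derivative 1) (at x)"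
    using has_vector_derivative_diff[OF has_vector_derivative_id has_vector_derivative_const] by simp
  have "((\<lambda>r. f (x + r)) has_vector_derivative f') (at ((\<lambda>r. r - x) x))" using assms by simp
  from vector_diff_chain_at[OF d1 this] show ?thesis by (simp add: o_def)
qed

lemma sum_split0: "sum f {0..a + b} = sum f {0..a} + (\<Sum>h\<in>{1..b}. f (a + h))" for f :: "nat \<Rightarrow> 'b::comm_monoid_add"
proof (induction b)
  case 0 then show ?case by simp
next
  case (Suc b)
  have "sum f {0..a + Suc b} = sum f {0..a + b} + f (a + Suc b)" by simp
  also have "\<dots> = sum f {0..a} + ((\<Sum>h\<in>{1..b}. f (a + h)) + f (a + Suc b))" using Suc by (simp add: add.assoc)
  also have "(\<Sum>h\<in>{1..b}. f (a + h)) + f (a + Suc b) = (\<Sum>h\<in>{1..Suc b}. f (a + h))" by simp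
  finally show ?case .
qed

locale stp =
  fixes v :: "nat \<Rightarrow> 'a::{real_algebra_1, euclidean_space}"
    and N :: nat and \<tau> :: nat and t :: "nat \<Rightarrow> nat"
    and D :: "('a \<times> (nat \<Rightarrow> real)) set"
  assumes v0: "v 0 = 1"
    and vsq: "\<And>s. s \<in> {1..N} \<Longrightarrow> v s * v s = -1"
    and vanti: "\<And>s r. s \<in> {1..N} \<Longrightarrow> r \<in> {1..N} \<Longrightarrow> s \<noteq> r \<Longrightarrow> v s * v r = - (v r * v s)"
    and vorth: "\<And>s r. s \<le> N \<Longrightarrow> r \<le> N \<Longrightarrow> inner (v s) (v r) = (if s = r then 1 else 0)"
    and tmono: "\<forall>h<\<tau>. t h < t (Suc h)"
    and tN: "t \<tau> = N"
    and Ddom: "T_domain v (t 0) \<tau> D"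
begin

lemma t_mono: "h < k \<Longrightarrow> k \<le> \<tau> \<Longrightarrow> t h < t k"
proof (induction k)
  case 0 then show ?case by simp
next
  case (Suc k)
  then show ?case using tmono by (metis Suc_leD Suc_le_lessD less_Suc_eq order_less_trans)
qed

lemma t_le_N: "h \<le> \<tau> \<Longrightarrow> t h \<le> N"
  using t_mono tN by (metis order_le_less order_less_imp_le)

definition blk :: "nat \<Rightarrow> nat set" where "blk h = {Suc (t (h - 1))..t h}"

lemma blk_sub: "h \<in> {1..\<tau>} \<Longrightarrow> blk h \<subseteq> {Suc (t 0)..N}"
proof -
  assume h: "h \<in> {1..\<tau>}"
  have "h - 1 \<le> \<tau>" using h by auto
  then have "t 0 \<le> t (h - 1)" using t_mono[of 0 "h-1"] by (cases "h - 1 = 0") auto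
  moreover have "t h \<le> N" using t_le_N h by auto
  ultimately show ?thesis unfolding blk_def by auto
qed

lemma blk_disj: "h \<in> {1..\<tau>} \<Longrightarrow> k \<in> {1..\<tau>} \<Longrightarrow> h \<noteq> k \<Longrightarrow> blk h \<inter> blk k = {}"
proof -
  assume h: "h \<in> {1..\<tau>}" and k: "k \<in> {1..\<tau>}" and hk: "h \<noteq> k"
  have *: "blk a \<inter> blk b = {}" if "a < b" "b \<le> \<tau>" "1 \<le> a" for a b
  proof -
    have "b - 1 \<le> \<tau>" "a \<le> b - 1" using that by auto
    then have "t a \<le> t (b - 1)" using t_mono[of a "b - 1"] by (cases "a = b - 1") auto
    then show ?thesis unfolding blk_def by auto
  qed
  show ?thesis using h k hk *[of h k] *[of k h] by (cases "h < k") auto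
qed

lemma subspace_eq_linear: "linear f \<Longrightarrow> linear g \<Longrightarrow> subspace {x. f x = g x}"
  by (auto simp: subspace_def linear_add linear_scale linear_0)

lemma subspace_inner0: "subspace {x. inner x y = (0::real)}"
  by (auto simp: subspace_def inner_add_left)

lemma ortho_span:
  assumes "B \<subseteq> {0..N}" "x \<in> span (v ` B)" "s \<le> N" "s \<notin> B"
  shows "inner x (v s) = 0"
proof -
  have "span (v ` B) \<subseteq> {x. inner x (v s) = 0}"
  proof (rule span_minimal)
    show "subspace {x. inner x (v s) = 0}" by (rule subspace_inner0)
    show "v ` B \<subseteq> {x. inner x (v s) = 0}"
    proof
      fix y assume "y \<in> v ` B"
      then obtain r where r: "r \<in> B" "y = v r" by auto
      then have "r \<le> N" "r \<noteq> s" using assms by auto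
      then show "y \<in> {x. inner x (v s) = 0}" using vorth[of r s] assms(3) r by simp
    qed
  qed
  then show ?thesis using assms(2) by auto
qed

lemma expand_span:
  assumes "B \<subseteq> {0..N}" "x \<in> span (v ` B)"
  shows "x = (\<Sum>s\<in>B. inner x (v s) *\<^sub>R v s)"
proof -
  have fin: "finite B" using assms(1) finite_subset by blast
  have "span (v ` B) \<subseteq> {x. x = (\<Sum>s\<in>B. inner x (v s) *\<^sub>R v s)}"
  proof (rule span_minimal)
    show "subspace {x. x = (\<Sum>s\<in>B. inner x (v s) *\<^sub>R v s)}"
      by (rule subspace_eq_linear) (auto intro!: linearI simp: inner_add_left scaleR_add_left sum.distrib scaleR_sum_right)
    show "v ` B \<subseteq> {x. x = (\<Sum>s\<in>B. inner x (v s) *\<^sub>R v s)}"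
    proof
      fix y assume "y \<in> v ` B"
      then obtain r where r: "r \<in> B" "y = v r" by auto
      have "(\<Sum>s\<in>B. inner (v r) (v s) *\<^sub>R v s) = (\<Sum>s\<in>B. (if s = r then v s else 0))"
      proof (rule sum.cong[OF refl])
        fix s assume "s \<in> B"
        then have "s \<le> N" "r \<le> N" using r assms(1) by auto
        then show "inner (v r) (v s) *\<^sub>R v s = (if s = r then v s else 0)" using vorth[of r s] by auto
      qed
      also have "\<dots> = v r" using r fin by (simp add: sum.delta')
      finally show "y \<in> {x. x = (\<Sum>s\<in>B. inner x (v s) *\<^sub>R v s)}" using r by simp
    qed
  qed
  then show ?thesis using assms(2) by auto
qed

lemma ortho_span2:
  assumes "B \<subseteq> {0..N}" "B' \<subseteq> {0..N}" "B \<inter> B' = {}" "x \<in> span (v ` B)" "y \<in> span (v ` B')"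
  shows "inner x y = 0"
proof -
  have "span (v ` B) \<subseteq> {x. inner x y = 0}"
  proof (rule span_minimal)
    show "subspace {x. inner x y = 0}" by (rule subspace_inner0)
    show "v ` B \<subseteq> {x. inner x y = 0}"
    proof
      fix z assume "z \<in> v ` B"
      then obtain r where r: "r \<in> B" "z = v r" by auto
      then have "r \<le> N" "r \<notin> B'" using assms(1,3) by auto
      then show "z \<in> {x. inner x y = 0}"
        using ortho_span[OF assms(2) assms(5), of r] r by (auto simp: inner_commute)
    qed
  qed
  then show ?thesis using assms(4) by auto
qed

lemma clifford:
  assumes "x \<in> span (v ` {1..N})" "y \<in> span (v ` {1..N})"
  shows "x * y + y * x = (- 2 * inner x y) *\<^sub>R 1"
proof -
  have base: "v s * y + y * v s = (- 2 * inner (v s) y) *\<^sub>R 1" if s: "s \<in> {1..N}" for s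
  proof -
    have "span (v ` {1..N}) \<subseteq> {y. v s * y + y * v s = (- 2 * inner (v s) y) *\<^sub>R 1}"
    proof (rule span_minimal)
      show "subspace {y. v s * y + y * v s = (- 2 * inner (v s) y) *\<^sub>R 1}"
        by (rule subspace_eq_linear) (auto intro!: linearI simp: inner_add_right algebra_simps)
      show "v ` {1..N} \<subseteq> {y. v s * y + y * v s = (- 2 * inner (v s) y) *\<^sub>R 1}"
      proof
        fix z assume "z \<in> v ` {1..N}"
        then obtain r where r: "r \<in> {1..N}" "z = v r" by auto
        show "z \<in> {y. v s * y + y * v s = (- 2 * inner (v s) y) *\<^sub>R 1}"
        proof (cases "r = s")
          case True
          have ip: "inner (v s) (v s) = 1" using vorth[of s s] s by auto
          have a: "v s * v s + v s * v s = (-2::'a)" using vsq[of s] s by simp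
          have b: "((- 2 * 1) *\<^sub>R 1 :: 'a) = -2" by (metis mult.right_neutral of_real_def of_real_numeral of_real_minus)
          show ?thesis using a b ip r True by simp
        next
          case False
          then show ?thesis using r s vanti[of s r] vorth[of s r] by auto
        qed
      qed
    qed
    then show ?thesis using assms(2) by auto
  qed
  have "span (v ` {1..N}) \<subseteq> {x. x * y + y * x = (- 2 * inner x y) *\<^sub>R 1}"
  proof (rule span_minimal)
    show "subspace {x. x * y + y * x = (- 2 * inner x y) *\<^sub>R 1}"
      by (rule subspace_eq_linear) (auto intro!: linearI simp: inner_add_left algebra_simps)
    show "v ` {1..N} \<subseteq> {x. x * y + y * x = (- 2 * inner x y) *\<^sub>R 1}" using base by auto
  qed
  then show ?thesis using assms(1) by auto
qed

lemma t0_le_N: "t 0 \<le> N" using t_le_N by simp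

lemma torus_span:
  assumes "J \<in> torus v t \<tau>" "h \<in> {1..\<tau>}"
  shows "J h \<in> span (v ` blk h)" "norm (J h) = 1"
  using assms unfolding torus_def sphere_span_def blk_def by auto

lemma blk_sub0: "h \<in> {1..\<tau>} \<Longrightarrow> blk h \<subseteq> {0..N}" using blk_sub by fastforce
lemma blk_sub1: "h \<in> {1..\<tau>} \<Longrightarrow> blk h \<subseteq> {1..N}" using blk_sub by fastforce

lemma torus_span1:
  assumes "J \<in> torus v t \<tau>" "h \<in> {1..\<tau>}"
  shows "J h \<in> span (v ` {1..N})"
  using torus_span[OF assms] blk_sub1[OF assms(2)] by (meson image_mono span_mono subsetD)

lemma two_eq: "x + x = (- 2) *\<^sub>R 1 \<Longrightarrow> x = (-1::'a)"
proof -
  assume "x + x = (- 2) *\<^sub>R 1"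
  then have "2 *\<^sub>R x = - (2 *\<^sub>R (1::'a))" by (simp add: scaleR_2)
  then have "2 *\<^sub>R x = 2 *\<^sub>R (- 1::'a)" by simp
  then show ?thesis by (metis scaleR_cancel_left zero_neq_numeral)
qed

lemma J_sq:
  assumes "J \<in> torus v t \<tau>" "h \<in> {1..\<tau>}"
  shows "J h * J h = -1"
proof -
  have "inner (J h) (J h) = 1" using torus_span[OF assms] by (simp add: power2_norm_eq_inner[symmetric])
  then show ?thesis using clifford[OF torus_span1[OF assms] torus_span1[OF assms]] two_eq by simp
qed

lemma J_anti:
  assumes "J \<in> torus v t \<tau>" "h \<in> {1..\<tau>}" "k \<in> {1..\<tau>}" "h \<noteq> k"
  shows "J h * J k = - (J k * J h)"
proof -
  have "inner (J h) (J k) = 0"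
    using ortho_span2[OF blk_sub0[OF assms(2)] blk_sub0[OF assms(3)] blk_disj[OF assms(2-4)]
       torus_span(1)[OF assms(1,2)] torus_span(1)[OF assms(1,3)]] .
  then show ?thesis using clifford[OF torus_span1[OF assms(1,2)] torus_span1[OF assms(1,3)]]
    by (simp add: eq_neg_iff_add_eq_0)
qed

lemma vJ_anti:
  assumes "J \<in> torus v t \<tau>" "h \<in> {1..\<tau>}" "s \<in> {1..t 0}"
  shows "v s * J h = - (J h * v s)"
proof -
  have sN: "s \<le> N" using assms(3) t0_le_N by auto
  have "s \<notin> blk h" using blk_sub[OF assms(2)] assms(3) by auto
  then have "inner (J h) (v s) = 0"
    using ortho_span[OF blk_sub0[OF assms(2)] torus_span(1)[OF assms(1,2)] sN] by simp
  moreover have "v s \<in> span (v ` {1..N})" using assms(3) sN by (intro span_base) auto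
  ultimately show ?thesis using clifford[OF _ torus_span1[OF assms(1,2)], of "v s"]
    by (simp add: eq_neg_iff_add_eq_0 inner_commute)
qed

lemma sigma_par_eq: "finite K \<Longrightarrow> sigma_par u (insert u K) = card {k\<in>K. k < u} + 1"
proof -
  assume fK: "finite K"
  have "{k \<in> insert u K. k \<le> u} = insert u {k\<in>K. k < u}" by auto
  then show ?thesis unfolding sigma_par_def using fK by simp
qed

lemma sigma_par_eq2: "sigma_par u (K - {u}) = card {k\<in>K. k < u}"
proof -
  have "{k \<in> K - {u}. k \<le> u} = {k\<in>K. k < u}" by auto
  then show ?thesis unfolding sigma_par_def by simp
qed

lemma J_mult_JK:
  assumes J: "J \<in> torus v t \<tau>" and u: "u \<in> {1..\<tau>}" and K: "K \<subseteq> {1..\<tau>}"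
  shows "J u * JK J K = (-1) ^ (sigma_par u (symd K u) + 1) *\<^sub>R JK J (symd K u)"
proof -
  define L where "L = {k\<in>K. k < u}"
  define R where "R = {k\<in>K. u < k}"
  have fK: "finite K" using K finite_subset by blast
  have fL: "finite L" and fR: "finite R" using fK unfolding L_def R_def by auto
  have LJ: "J u * JK J L = (-1) ^ card L * (JK J L * J u)"
  proof (rule JK_anti[OF fL])
    show "\<forall>h\<in>L. J u * J h = - (J h * J u)" using J_anti[OF J u] K unfolding L_def by auto
  qed
  have LR: "\<forall>a\<in>L. \<forall>b\<in>R. a < b" unfolding L_def R_def by auto
  have uR: "\<forall>a\<in>{u}. \<forall>b\<in>R. a < b" unfolding R_def by auto
  have LuR: "\<forall>a\<in>L. \<forall>b\<in>{u} \<union> R. a < b" unfolding L_def R_def by auto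
  have m1: "((-1::real) ^ n) *\<^sub>R (x::'a) = (-1) ^ n * x" for n x
    by (cases "even n") auto
  show ?thesis
  proof (cases "u \<in> K")
    case False
    have KLR: "K = L \<union> R" using False unfolding L_def R_def by (auto; metis linorder_neqE_nat)
    have KLR2: "insert u K = L \<union> ({u} \<union> R)" using False unfolding L_def R_def by (auto; metis linorder_neqE_nat)
    have "J u * JK J K = J u * (JK J L * JK J R)"
      by (subst KLR) (simp add: JK_union[OF fL fR LR])
    also have "\<dots> = (J u * JK J L) * JK J R" by (simp only: mult.assoc)
    also have "\<dots> = ((-1) ^ card L * (JK J L * J u)) * JK J R" by (simp only: LJ)
    also have "\<dots> = (-1) ^ card L * (JK J L * (J u * JK J R))" by (simp only: mult.assoc)
    also have "J u * JK J R = JK J ({u} \<union> R)"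
      using JK_union[OF _ fR uR, of J] by (simp add: JK_single)
    also have "JK J L * JK J ({u} \<union> R) = JK J (insert u K)"
      using JK_union[OF fL _ LuR, of J] fR by (simp add: KLR2)
    finally show ?thesis using False fK sigma_par_eq[OF fK, of u] unfolding symd_def L_def
      by (simp add: m1)
  next
    case True
    have KLR: "K = L \<union> ({u} \<union> R)" using True unfolding L_def R_def by (auto; metis linorder_neqE_nat)
    have KLR2: "K - {u} = L \<union> R" unfolding L_def R_def by (auto; metis linorder_neqE_nat)
    have "J u * JK J K = J u * (JK J L * (J u * JK J R))"
      using JK_union[OF fL _ LuR, of J] JK_union[OF _ fR uR, of J] fR by (subst KLR) (simp add: JK_single)
    also have "\<dots> = (J u * JK J L) * (J u * JK J R)" by (simp only: mult.assoc)
    also have "\<dots> = ((-1) ^ card L * (JK J L * J u)) * (J u * JK J R)" by (simp only: LJ)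
    also have "\<dots> = (-1) ^ card L * (JK J L * ((J u * J u) * JK J R))" by (simp only: mult.assoc)
    also have "\<dots> = - ((-1) ^ card L * (JK J L * JK J R))" using J_sq[OF J u] by simp
    also have "JK J L * JK J R = JK J (K - {u})"
      by (simp add: KLR2 JK_union[OF fL fR LR])
    finally show ?thesis using True sigma_par_eq2[of u K] unfolding symd_def L_def
      by (simp add: m1)
  qed
qed

lemma Dsub: "p \<in> D \<Longrightarrow> fst p \<in> span (v ` {0..t 0}) \<and> (\<forall>h. h \<notin> {1..\<tau>} \<longrightarrow> snd p h = 0)"
  using Ddom openin_imp_subset unfolding T_domain_def by (fastforce simp: mem_Times_iff)

lemma tpoint_eq: "tpoint J \<tau> (\<alpha>, \<beta>) = \<alpha> + (\<Sum>h\<in>{1..\<tau>}. \<beta> h *\<^sub>R J h)"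
  by (simp add: tpoint_def)

lemma inner_tpoint:
  assumes J: "J \<in> torus v t \<tau>" and a: "\<alpha> \<in> span (v ` {0..t 0})" and h: "h \<in> {1..\<tau>}" and s: "s \<in> blk h"
  shows "inner (tpoint J \<tau> (\<alpha>, \<beta>)) (v s) = \<beta> h * inner (J h) (v s)"
proof -
  have sN: "s \<le> N" and s0: "s \<notin> {0..t 0}" using blk_sub[OF h] s by auto
  have "inner \<alpha> (v s) = 0" using ortho_span[OF _ a sN s0] t0_le_N by auto
  moreover have "(\<Sum>k\<in>{1..\<tau>}. \<beta> k * inner (J k) (v s)) = (\<Sum>k\<in>{1..\<tau>}. if k = h then \<beta> h * inner (J h) (v s) else 0)"
  proof (rule sum.cong[OF refl])
    fix k assume k: "k \<in> {1..\<tau>}"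
    show "\<beta> k * inner (J k) (v s) = (if k = h then \<beta> h * inner (J h) (v s) else 0)"
    proof (cases "k = h")
      case False
      then have "s \<notin> blk k" using blk_disj[OF h k] s by auto
      then have "inner (J k) (v s) = 0" using ortho_span[OF blk_sub0[OF k] torus_span(1)[OF J k] sN] by simp
      then show ?thesis using False by simp
    qed simp
  qed
  ultimately show ?thesis using h
    by (simp add: tpoint_eq inner_add_left inner_sum_left)
qed

lemma tpoint_unique:
  assumes J: "J \<in> torus v t \<tau>" and J': "J' \<in> torus v t \<tau>"
    and a: "\<alpha> \<in> span (v ` {0..t 0})" and a': "\<alpha>' \<in> span (v ` {0..t 0})"
    and eq: "tpoint J \<tau> (\<alpha>, \<beta>) = tpoint J' \<tau> (\<alpha>', \<beta>')"
  shows "\<alpha> = \<alpha>' \<and> (\<forall>h\<in>{1..\<tau>}. \<beta> h *\<^sub>R J h = \<beta>' h *\<^sub>R J' h)"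
proof -
  have comp: "\<beta> h *\<^sub>R J h = \<beta>' h *\<^sub>R J' h" if h: "h \<in> {1..\<tau>}" for h
  proof -
    have X: "\<beta> h *\<^sub>R J h \<in> span (v ` blk h)" using torus_span(1)[OF J h] by (simp add: span_scale)
    have X': "\<beta>' h *\<^sub>R J' h \<in> span (v ` blk h)" using torus_span(1)[OF J' h] by (simp add: span_scale)
    have "inner (\<beta> h *\<^sub>R J h) (v s) = inner (\<beta>' h *\<^sub>R J' h) (v s)" if s: "s \<in> blk h" for s
      using inner_tpoint[OF J a h s, of \<beta>] inner_tpoint[OF J' a' h s, of \<beta>'] eq by simp
    then show ?thesis
      using expand_span[OF blk_sub0[OF h] X] expand_span[OF blk_sub0[OF h] X'] by (metis (no_types, lifting) sum.cong)
  qed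
  have "(\<Sum>h\<in>{1..\<tau>}. \<beta> h *\<^sub>R J h) = (\<Sum>h\<in>{1..\<tau>}. \<beta>' h *\<^sub>R J' h)"
    using comp by (rule sum.cong[OF refl])
  then have "\<alpha> = \<alpha>'" using eq by (simp add: tpoint_eq)
  then show ?thesis using comp by blast
qed

lemma beta_cases:
  assumes J: "J \<in> torus v t \<tau>" and J': "J' \<in> torus v t \<tau>" and h: "h \<in> {1..\<tau>}"
    and eq: "b *\<^sub>R J h = b' *\<^sub>R J' h" and b: "b \<noteq> 0"
  shows "(b' = b \<and> J' h = J h) \<or> (b' = - b \<and> J' h = - J h)"
proof -
  have "norm (b *\<^sub>R J h) = norm (b' *\<^sub>R J' h)" using eq by simp
  then have "\<bar>b\<bar> = \<bar>b'\<bar>" using torus_span(2)[OF J h] torus_span(2)[OF J' h] by simp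
  then have "b' = b \<or> b' = - b" by (auto simp: abs_eq_iff)
  then show ?thesis
  proof
    assume "b' = b" then show ?thesis using eq b by simp
  next
    assume bb: "b' = - b"
    then have "b *\<^sub>R J h = b *\<^sub>R (- J' h)" using eq by simp
    then have "J h = - J' h" using b by (metis scaleR_cancel_left)
    then show ?thesis using bb by simp
  qed
qed

definition par :: "nat set \<Rightarrow> ('a \<times> (nat \<Rightarrow> real) \<Rightarrow> 'a) \<Rightarrow> bool" where
  "par K g \<longleftrightarrow> (\<forall>p\<in>D. \<forall>h\<in>{1..\<tau>}. g (fst p, (snd p)(h := - snd p h)) = (if h \<in> K then - g p else g p))"

lemma stem_par: "T_stem \<tau> D G \<longleftrightarrow> (\<forall>K. K \<subseteq> {1..\<tau>} \<longrightarrow> par K (G K))"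
  unfolding T_stem_def par_def by blast

lemma D_flip: "p \<in> D \<Longrightarrow> h \<in> {1..\<tau>} \<Longrightarrow> (fst p, (snd p)(h := - snd p h)) \<in> D"
  using Ddom unfolding T_domain_def by blast

lemma flip_D:
  assumes "finite S" "S \<subseteq> {1..\<tau>}" "p \<in> D"
  shows "(fst p, flp S (snd p)) \<in> D \<and> (\<forall>K g. par K g \<longrightarrow> g (fst p, flp S (snd p)) = (-1) ^ card (K \<inter> S) *\<^sub>R g p)"
  using assms
proof (induction S rule: finite_induct)
  case empty then show ?case by simp
next
  case (insert a S)
  define q where "q = (fst p, flp S (snd p))"
  have q: "q \<in> D" using insert unfolding q_def by auto
  have a: "a \<in> {1..\<tau>}" using insert by auto
  have eqq: "(fst p, flp (insert a S) (snd p)) = (fst q, (snd q)(a := - snd q a))"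
    unfolding q_def using insert by (simp add: flp_insert)
  have "(fst p, flp (insert a S) (snd p)) \<in> D" using D_flip[OF q a] eqq by simp
  moreover have "g (fst p, flp (insert a S) (snd p)) = (-1) ^ card (K \<inter> insert a S) *\<^sub>R g p" if pg: "par K g" for K g
  proof -
    have A: "g (fst p, flp (insert a S) (snd p)) = (if a \<in> K then - g q else g q)"
      using pg q a unfolding par_def eqq by blast
    have B: "g q = (-1) ^ card (K \<inter> S) *\<^sub>R g p" using insert pg unfolding q_def by auto
    have C: "card (K \<inter> insert a S) = (if a \<in> K then Suc (card (K \<inter> S)) else card (K \<inter> S))"
      using insert by auto
    show ?thesis using A B C by simp
  qed
  ultimately show ?case by blast
qed

lemma par_zero:
  assumes "par K g" "p \<in> D" "h \<in> K" "h \<in> {1..\<tau>}" "snd p h = 0"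
  shows "g p = 0"
proof -
  have "(snd p)(h := - snd p h) = snd p" using assms(5) by auto
  then have "g p = - g p" using assms unfolding par_def by (metis prod.collapse)
  then show ?thesis by (rule self_neg_zero)
qed

lemma prod_sign: "finite K \<Longrightarrow> (\<Prod>h\<in>K. if h \<in> S then -1 else (1::real)) = (-1) ^ card (K \<inter> S)"
  by (simp add: prod.If_cases Int_def)

lemma WD:
  assumes G: "T_stem \<tau> D G" and p: "p \<in> D" and p': "p' \<in> D"
    and J: "J \<in> torus v t \<tau>" and J': "J' \<in> torus v t \<tau>"
    and eq: "tpoint J \<tau> p = tpoint J' \<tau> p'"
  shows "(\<Sum>K\<in>Pow {1..\<tau>}. JK J K * G K p) = (\<Sum>K\<in>Pow {1..\<tau>}. JK J' K * G K p')"
proof -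
  obtain \<alpha> \<beta> where pp: "p = (\<alpha>, \<beta>)" by force
  obtain \<alpha>' \<beta>' where pp': "p' = (\<alpha>', \<beta>')" by force
  have a: "\<alpha> \<in> span (v ` {0..t 0})" and b0: "\<forall>h. h \<notin> {1..\<tau>} \<longrightarrow> \<beta> h = 0" using Dsub[OF p] pp by auto
  have a': "\<alpha>' \<in> span (v ` {0..t 0})" and b0': "\<forall>h. h \<notin> {1..\<tau>} \<longrightarrow> \<beta>' h = 0" using Dsub[OF p'] pp' by auto
  have U: "\<alpha> = \<alpha>' \<and> (\<forall>h\<in>{1..\<tau>}. \<beta> h *\<^sub>R J h = \<beta>' h *\<^sub>R J' h)"
    using tpoint_unique[OF J J' a a'] eq pp pp' by simp
  define S where "S = {h\<in>{1..\<tau>}. \<beta>' h \<noteq> \<beta> h}"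
  have fS: "finite S" and S1: "S \<subseteq> {1..\<tau>}" unfolding S_def by auto
  have nz: "J' h \<noteq> 0" if "h \<in> {1..\<tau>}" for h using torus_span(2)[OF J' that] by auto
  have cases: "(\<beta>' h = \<beta> h \<and> J' h = J h) \<or> (\<beta>' h = - \<beta> h \<and> J' h = - J h)"
    if "h \<in> {1..\<tau>}" "\<beta> h \<noteq> 0" for h
    using beta_cases[OF J J' that(1)] U that by blast
  have Sdef: "\<beta>' h = - \<beta> h \<and> \<beta> h \<noteq> 0" if "h \<in> S" for h
  proof -
    have h: "h \<in> {1..\<tau>}" "\<beta>' h \<noteq> \<beta> h" using that unfolding S_def by auto
    have "\<beta> h \<noteq> 0"
    proof
      assume "\<beta> h = 0"
      moreover have "\<beta> h *\<^sub>R J h = \<beta>' h *\<^sub>R J' h" using U h(1) by blast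
      ultimately have "\<beta>' h *\<^sub>R J' h = 0" by simp
      then have "\<beta>' h = 0" using nz[OF h(1)] by simp
      then show False using h \<open>\<beta> h = 0\<close> by simp
    qed
    then show ?thesis using cases[OF h(1)] h by auto
  qed
  have flpeq: "flp S \<beta>' = \<beta>"
  proof
    fix h show "flp S \<beta>' h = \<beta> h"
    proof (cases "h \<in> S")
      case True then show ?thesis using Sdef[OF True] by (simp add: flp_def)
    next
      case False
      then show ?thesis using b0 b0' unfolding flp_def S_def by auto
    qed
  qed
  have Gp: "G K p' = (-1) ^ card (K \<inter> S) *\<^sub>R G K p" if K: "K \<subseteq> {1..\<tau>}" for K
  proof -
    have "par K (G K)" using G K stem_par by blast
    then have "G K p = (-1) ^ card (K \<inter> S) *\<^sub>R G K p'"
      using flip_D[OF fS S1 p'] pp pp' flpeq U by auto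
    then show ?thesis by simp
  qed
  show ?thesis
  proof (rule sum.cong[OF refl])
    fix K assume "K \<in> Pow {1..\<tau>}"
    then have K: "K \<subseteq> {1..\<tau>}" by auto
    have fK: "finite K" using K finite_subset by blast
    have pK: "par K (G K)" using G K stem_par by blast
    show "JK J K * G K p = JK J' K * G K p'"
    proof (cases "\<exists>h\<in>K. \<beta> h = 0")
      case True
      then obtain h where h: "h \<in> K" "\<beta> h = 0" by auto
      have "G K p = 0" using par_zero[OF pK p h(1)] h K pp by auto
      then show ?thesis using Gp[OF K] by simp
    next
      case False
      have "\<forall>h\<in>K. J' h = (if h \<in> S then -1 else 1) *\<^sub>R J h"
      proof
        fix h assume h: "h \<in> K"
        then have h1: "h \<in> {1..\<tau>}" and bh: "\<beta> h \<noteq> 0" using K False by auto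
        show "J' h = (if h \<in> S then -1 else 1) *\<^sub>R J h"
          using cases[OF h1 bh] h1 bh unfolding S_def by auto
      qed
      then have "JK J' K = (-1) ^ card (K \<inter> S) *\<^sub>R JK J K"
        using JK_scale[OF fK, of J' "\<lambda>h. if h \<in> S then -1 else 1" J] prod_sign[OF fK, of S] by simp
      then show ?thesis using Gp[OF K] by (simp add: power_mult_distrib[symmetric])
    qed
  qed
qed

lemma IND:
  assumes G: "T_stem \<tau> D G" and p: "p \<in> D" and J: "J \<in> torus v t \<tau>"
  shows "induced v t \<tau> D G (tpoint J \<tau> p) = (\<Sum>K\<in>Pow {1..\<tau>}. JK J K * G K p)"
proof -
  let ?P = "\<lambda>y. \<exists>p'\<in>D. \<exists>J'\<in>torus v t \<tau>. tpoint J \<tau> p = tpoint J' \<tau> p' \<and> y = (\<Sum>K\<in>Pow {1..\<tau>}. JK J' K * G K p')"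
  have "?P (\<Sum>K\<in>Pow {1..\<tau>}. JK J K * G K p)" using p J by blast
  then have "?P (SOME y. ?P y)" by (rule someI)
  then obtain p' J' where p': "p' \<in> D" "J' \<in> torus v t \<tau>" "tpoint J \<tau> p = tpoint J' \<tau> p'"
    "(SOME y. ?P y) = (\<Sum>K\<in>Pow {1..\<tau>}. JK J' K * G K p')" by blast
  then show ?thesis unfolding induced_def using WD[OF G p p'(1) J p'(2,3)] by simp
qed

lemma J_inj: assumes J: "J \<in> torus v t \<tau>" shows "inj_on J {1..\<tau>}"
proof
  fix h k assume h: "h \<in> {1..\<tau>}" and k: "k \<in> {1..\<tau>}" and e: "J h = J k"
  show "h = k"
  proof (rule ccontr)
    assume hk: "h \<noteq> k"
    have "inner (J h) (J k) = 0"
      using ortho_span2[OF blk_sub0[OF h] blk_sub0[OF k] blk_disj[OF h k hk]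
       torus_span(1)[OF J h] torus_span(1)[OF J k]] .
    moreover have "inner (J h) (J h) = 1" using torus_span(2)[OF J h] by (simp add: power2_norm_eq_inner[symmetric])
    ultimately show False using e by simp
  qed
qed

lemma rep:
  assumes J: "J \<in> torus v t \<tau>" and yO: "y \<in> OmegaD v t \<tau> D" and yR: "y \<in> RJ v (t 0) \<tau> J"
  shows "\<exists>p\<in>D. y = tpoint J \<tau> p"
proof -
  obtain a b where ab: "y = a + b" "a \<in> span (v ` {0..t 0})" "b \<in> span (J ` {1..\<tau>})"
    using yR unfolding RJ_def span_Un by blast
  obtain u where u: "b = (\<Sum>x\<in>J ` {1..\<tau>}. u x *\<^sub>R x)"
    using ab(3) span_finite[of "J ` {1..\<tau>}"] by auto
  define \<beta>0 where "\<beta>0 = (\<lambda>h. if h \<in> {1..\<tau>} then u (J h) else 0)"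
  have "b = (\<Sum>h\<in>{1..\<tau>}. u (J h) *\<^sub>R J h)" using u sum.reindex[OF J_inj[OF J], of "\<lambda>x. u x *\<^sub>R x"] by simp
  also have "\<dots> = (\<Sum>h\<in>{1..\<tau>}. \<beta>0 h *\<^sub>R J h)" unfolding \<beta>0_def by (rule sum.cong) auto
  finally have y0: "y = tpoint J \<tau> (a, \<beta>0)" using ab(1) by (simp add: tpoint_eq)
  obtain p'' J'' where pJ: "p'' \<in> D" "J'' \<in> torus v t \<tau>" "y = tpoint J'' \<tau> p''"
    using yO unfolding OmegaD_def by blast
  obtain \<alpha>'' \<beta>'' where pp: "p'' = (\<alpha>'', \<beta>'')" by force
  have a'': "\<alpha>'' \<in> span (v ` {0..t 0})" and b0'': "\<forall>h. h \<notin> {1..\<tau>} \<longrightarrow> \<beta>'' h = 0" using Dsub[OF pJ(1)] pp by auto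
  have U: "a = \<alpha>'' \<and> (\<forall>h\<in>{1..\<tau>}. \<beta>0 h *\<^sub>R J h = \<beta>'' h *\<^sub>R J'' h)"
  proof -
    have "tpoint J \<tau> (a, \<beta>0) = tpoint J'' \<tau> (\<alpha>'', \<beta>'')" using y0 pJ(3) pp by simp
    then show ?thesis using tpoint_unique[OF J pJ(2) ab(2) a''] by blast
  qed
  define S where "S = {h\<in>{1..\<tau>}. \<beta>0 h \<noteq> \<beta>'' h}"
  have fS: "finite S" and S1: "S \<subseteq> {1..\<tau>}" unfolding S_def by auto
  have Sdef: "\<beta>0 h = - \<beta>'' h" if "h \<in> S" for h
  proof -
    have h: "h \<in> {1..\<tau>}" "\<beta>0 h \<noteq> \<beta>'' h" using that unfolding S_def by auto
    have e: "\<beta>'' h *\<^sub>R J'' h = \<beta>0 h *\<^sub>R J h" using U h(1) by simp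
    have "\<beta>'' h \<noteq> 0"
    proof
      assume z: "\<beta>'' h = 0"
      then have "\<beta>0 h *\<^sub>R J h = 0" using e by simp
      then have "\<beta>0 h = 0" using torus_span(2)[OF J h(1)] by auto
      then show False using h z by simp
    qed
    then show ?thesis using beta_cases[OF pJ(2) J h(1) e] h by auto
  qed
  have flpeq: "flp S \<beta>'' = \<beta>0"
  proof
    fix h show "flp S \<beta>'' h = \<beta>0 h"
    proof (cases "h \<in> S")
      case True then show ?thesis using Sdef[OF True] by (simp add: flp_def)
    next
      case False
      then show ?thesis using b0'' unfolding flp_def S_def \<beta>0_def by auto
    qed
  qed
  have "(\<alpha>'', flp S \<beta>'') \<in> D" using flip_D[OF fS S1 pJ(1)] pp by simp
  moreover have "y = tpoint J \<tau> (\<alpha>'', flp S \<beta>'')" using y0 flpeq U by simp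
  ultimately show ?thesis by blast
qed

definition lin :: "nat \<Rightarrow> 'a \<times> (nat \<Rightarrow> real) \<Rightarrow> real \<Rightarrow> 'a \<times> (nat \<Rightarrow> real)" where
  "lin i p r = (if i \<le> t 0 then (fst p + r *\<^sub>R v i, snd p)
      else (fst p, (snd p)(i - t 0 := snd p (i - t 0) + r)))"

definition pdi :: "nat \<Rightarrow> ('a \<times> (nat \<Rightarrow> real) \<Rightarrow> 'a) \<Rightarrow> 'a \<times> (nat \<Rightarrow> real) \<Rightarrow> 'a" where
  "pdi i G p = vector_derivative (\<lambda>r. G (lin i p r)) (at 0)"

lemma pdi_alpha: "i \<le> t 0 \<Longrightarrow> pdi i G = pd_alpha (v i) G"
  by (auto simp: fun_eq_iff pdi_def pd_alpha_def lin_def)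

lemma pdi_beta: "h \<in> {1..\<tau>} \<Longrightarrow> pdi (t 0 + h) G = pd_beta h G"
  by (auto simp: fun_eq_iff pdi_def pd_beta_def lin_def)

lemma lin0: "lin i p 0 = p" by (auto simp: lin_def)

lemma lin_sub:
  assumes p: "p \<in> D" and i: "i \<le> t 0 + \<tau>"
  shows "lin i p r \<in> span (v ` {0..t 0}) \<times> {\<beta>. \<forall>h. h \<notin> {1..\<tau>} \<longrightarrow> \<beta> h = 0}"
proof (cases "i \<le> t 0")
  case True
  have "v i \<in> span (v ` {0..t 0})" using True by (intro span_base) auto
  then have "fst p + r *\<^sub>R v i \<in> span (v ` {0..t 0})" using Dsub[OF p] by (intro span_add span_scale) auto
  then show ?thesis using True Dsub[OF p] by (auto simp: lin_def)
next
  case False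
  then have "i - t 0 \<in> {1..\<tau>}" using i by auto
  then show ?thesis using False Dsub[OF p] by (auto simp: lin_def)
qed

lemma lin_cont: "continuous (at 0) (lin i p)"
proof (cases "i \<le> t 0")
  case True
  then have "lin i p = (\<lambda>r. (fst p + r *\<^sub>R v i, snd p))" by (auto simp: fun_eq_iff lin_def)
  then show ?thesis by (auto intro!: continuous_intros)
next
  case False
  let ?u = "i - t 0"
  have e: "lin i p = (\<lambda>r. (fst p, (snd p)(?u := snd p ?u + r)))" using False by (auto simp: fun_eq_iff lin_def)
  have "continuous_on UNIV (\<lambda>r. (snd p)(?u := snd p ?u + r))"
  proof (rule continuous_on_coordinatewise_then_product)
    fix j
    show "continuous_on UNIV (\<lambda>r. ((snd p)(?u := snd p ?u + r)) j)"
      by (cases "j = ?u") (auto intro!: continuous_intros)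
  qed
  then have "continuous (at 0) (\<lambda>r. (snd p)(?u := snd p ?u + r))"
    by (simp add: continuous_on_eq_continuous_at)
  then show ?thesis unfolding e by (intro continuous_Pair continuous_const)
qed

lemma lin_ev:
  assumes p: "p \<in> D" and i: "i \<le> t 0 + \<tau>"
  shows "\<exists>e>0. \<forall>r. \<bar>r\<bar> < e \<longrightarrow> lin i p r \<in> D"
proof -
  obtain T where T: "open T" "D = (span (v ` {0..t 0}) \<times> {\<beta>. \<forall>h. h \<notin> {1..\<tau>} \<longrightarrow> \<beta> h = 0}) \<inter> T"
    using Ddom unfolding T_domain_def openin_open by blast
  have "lin i p 0 \<in> T" using p T(2) lin0 by auto
  then obtain S where S: "open S" "0 \<in> S" "\<forall>x\<in>S. lin i p x \<in> T"
    using lin_cont[of i p] T(1) unfolding continuous_at_open by blast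
  then obtain e where e: "e > 0" "ball 0 e \<subseteq> S" using open_contains_ball by blast
  have "lin i p r \<in> D" if "\<bar>r\<bar> < e" for r
  proof -
    have "r \<in> S" using e that by (auto simp: dist_real_def)
    then show ?thesis using S(3) lin_sub[OF p i] T(2) by auto
  qed
  then show ?thesis using e(1) by blast
qed

lemma ev_lin:
  assumes p: "p \<in> D" and i: "i \<le> t 0 + \<tau>"
  shows "eventually (\<lambda>r. lin i p r \<in> D) (nhds 0)"
  using lin_ev[OF p i] unfolding eventually_nhds_metric by (auto simp: dist_real_def)

lemma tpoint_lin:
  assumes i: "i \<le> t 0 + \<tau>"
  shows "tpoint J \<tau> (lin i p r) = tpoint J \<tau> p + r *\<^sub>R wJ v (t 0) J i"
proof (cases "i \<le> t 0")
  case True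
  then show ?thesis by (simp add: lin_def tpoint_def wJ_def algebra_simps)
next
  case False
  define u where "u = i - t 0"
  have u: "u \<in> {1..\<tau>}" using False i unfolding u_def by auto
  have "(\<Sum>h\<in>{1..\<tau>}. ((snd p)(u := snd p u + r)) h *\<^sub>R J h)
      = (\<Sum>h\<in>{1..\<tau>}. snd p h *\<^sub>R J h + (if h = u then r *\<^sub>R J h else 0))"
    by (rule sum.cong) (auto simp: scaleR_add_left)
  also have "\<dots> = (\<Sum>h\<in>{1..\<tau>}. snd p h *\<^sub>R J h) + r *\<^sub>R J u"
    using u by (simp add: sum.distrib)
  finally show ?thesis using False unfolding u_def by (simp add: lin_def tpoint_def wJ_def algebra_simps)
qed

lemma SD:
  assumes J: "J \<in> torus v t \<tau>"
    and grel: "\<forall>q\<in>D. g (tpoint J \<tau> q) = (\<Sum>K\<in>Pow {1..\<tau>}. JK J K * G K q)"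
    and p: "p \<in> D" and i: "i \<le> t 0 + \<tau>"
    and dif: "\<forall>K\<in>Pow {1..\<tau>}. (\<lambda>r. G K (lin i p r)) differentiable (at 0)"
  shows "sd (wJ v (t 0) J i) g (tpoint J \<tau> p) = (\<Sum>K\<in>Pow {1..\<tau>}. JK J K * pdi i (G K) p)"
proof -
  let ?w = "wJ v (t 0) J i"
  have ev: "eventually (\<lambda>r. r \<in> UNIV \<longrightarrow> g (tpoint J \<tau> p + r *\<^sub>R ?w) = (\<Sum>K\<in>Pow {1..\<tau>}. JK J K * G K (lin i p r))) (nhds 0)"
    using ev_lin[OF p i]
  proof (rule eventually_mono)
    fix r assume "lin i p r \<in> D"
    then show "r \<in> UNIV \<longrightarrow> g (tpoint J \<tau> p + r *\<^sub>R ?w) = (\<Sum>K\<in>Pow {1..\<tau>}. JK J K * G K (lin i p r))"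
      using grel tpoint_lin[OF i, of J p r] by metis
  qed
  have "sd ?w g (tpoint J \<tau> p) = vector_derivative (\<lambda>r. \<Sum>K\<in>Pow {1..\<tau>}. JK J K * G K (lin i p r)) (at 0)"
    unfolding sd_def by (rule vector_derivative_cong_eq[OF ev]) auto
  also have "\<dots> = (\<Sum>K\<in>Pow {1..\<tau>}. JK J K * pdi i (G K) p)"
  proof (rule vector_derivative_at)
    show "((\<lambda>r. \<Sum>K\<in>Pow {1..\<tau>}. JK J K * G K (lin i p r)) has_vector_derivative
        (\<Sum>K\<in>Pow {1..\<tau>}. JK J K * pdi i (G K) p)) (at 0)"
      unfolding pdi_def
      by (intro has_vector_derivative_sum lmult_vd) (use dif vector_derivative_works in blast)
  qed
  finally show ?thesis .
qed

lemma C1_dif: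
  assumes "C1_on v (t 0) \<tau> D G" "p \<in> D" "i \<le> t 0 + \<tau>"
  shows "(\<lambda>r. G (lin i p r)) differentiable (at 0)"
proof (cases "i \<le> t 0")
  case True
  then show ?thesis using assms unfolding C1_on_def lin_def by auto
next
  case False
  then have "i - t 0 \<in> {1..\<tau>}" using assms by auto
  then show ?thesis using assms False unfolding C1_on_def lin_def by auto
qed

lemma C1_dif_all:
  assumes "C1_on v (t 0) \<tau> D G" "i \<le> t 0 + \<tau>"
  shows "\<forall>p\<in>D. (\<lambda>r. G (lin i p r)) differentiable (at 0)"
  using C1_dif assms by blast

lemma C1_cont:
  assumes "C1_on v (t 0) \<tau> D G" "i \<le> t 0 + \<tau>"
  shows "continuous_on D (pdi i G)"
proof (cases "i \<le> t 0")
  case True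
  then show ?thesis using assms unfolding C1_on_def by (simp add: pdi_alpha)
next
  case False
  then have h: "i - t 0 \<in> {1..\<tau>}" and ii: "i = t 0 + (i - t 0)" using assms by auto
  show ?thesis using assms h pdi_beta[OF h, of G] ii unfolding C1_on_def by metis
qed

lemma par_add: "par K g \<Longrightarrow> par K g' \<Longrightarrow> par K (\<lambda>p. g p + g' p)"
  unfolding par_def by auto
lemma par_diff: "par K g \<Longrightarrow> par K g' \<Longrightarrow> par K (\<lambda>p. g p - g' p)"
  unfolding par_def by auto
lemma par_scale: "par K g \<Longrightarrow> par K (\<lambda>p. c *\<^sub>R g p)"
  unfolding par_def by auto
lemma par_lmult: "par K g \<Longrightarrow> par K (\<lambda>p. a * g p)"
  unfolding par_def by auto
lemma par_sum: "(\<And>j. j \<in> I \<Longrightarrow> par K (g j)) \<Longrightarrow> par K (\<lambda>p. \<Sum>j\<in>I. g j p)"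
  unfolding par_def by (auto simp: sum_negf intro!: sum.cong)

lemma vd_neg_arg:
  assumes "(f has_vector_derivative f') (at 0)"
  shows "((\<lambda>r. f (- r)) has_vector_derivative - f') (at 0)"
proof -
  have "(uminus has_vector_derivative (-1::real)) (at (0::real))"
    using has_vector_derivative_minus[OF has_vector_derivative_id] by simp
  from vector_diff_chain_at[OF this] assms show ?thesis by (simp add: o_def)
qed

lemma par_pdi:
  assumes pg: "par K g" and i: "i \<le> t 0 + \<tau>"
    and dif: "\<forall>p\<in>D. (\<lambda>r. g (lin i p r)) differentiable (at 0)"
  shows "par (if t 0 < i then symd K (i - t 0) else K) (pdi i g)"
  unfolding par_def
proof (intro ballI)
  fix p h assume p: "p \<in> D" and h: "h \<in> {1..\<tau>}"
  define q where "q = (fst p, (snd p)(h := - snd p h))"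
  define K' where "K' = (if t 0 < i then symd K (i - t 0) else K)"
  have dp: "((\<lambda>r. g (lin i p r)) has_vector_derivative pdi i g p) (at 0)"
    using dif p vector_derivative_works unfolding pdi_def by blast
  have flipD: "g (fst x, (snd x)(h := - snd x h)) = (if h \<in> K then - g x else g x)" if "x \<in> D" for x
    using pg that h unfolding par_def by blast
  show "pdi i g (fst p, (snd p)(h := - snd p h)) = (if h \<in> K' then - pdi i g p else pdi i g p)"
    unfolding K'_def[symmetric]
  proof (cases "t 0 < i \<and> h = i - t 0")
    case False
    have lq: "lin i q r = (fst (lin i p r), (snd (lin i p r))(h := - snd (lin i p r) h))" for r
      using False unfolding q_def lin_def by (auto simp: fun_upd_twist)
    have ev: "eventually (\<lambda>r. r \<in> UNIV \<longrightarrow> g (lin i q r) = (if h \<in> K then - g (lin i p r) else g (lin i p r))) (nhds 0)"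
      using ev_lin[OF p i] by (rule eventually_mono) (simp add: lq flipD)
    have "pdi i g q = vector_derivative (\<lambda>r. if h \<in> K then - g (lin i p r) else g (lin i p r)) (at 0)"
      unfolding pdi_def by (rule vector_derivative_cong_eq[OF ev]) auto
    also have "\<dots> = (if h \<in> K then - pdi i g p else pdi i g p)"
    proof (cases "h \<in> K")
      case True
      then show ?thesis using vector_derivative_at[OF has_vector_derivative_minus[OF dp]] by simp
    next
      case False
      then show ?thesis using vector_derivative_at[OF dp] by simp
    qed
    also have "(h \<in> K) = (h \<in> K')" using False unfolding K'_def symd_def by auto
    finally show ?thesis by (simp add: q_def)
  next
    case True
    then have hu: "h = i - t 0" and ti: "t 0 < i" by auto
    have lq: "lin i q r = (fst (lin i p (- r)), (snd (lin i p (- r)))(h := - snd (lin i p (- r)) h))" for r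
      using ti hu unfolding q_def lin_def by auto
    obtain e where e: "e > 0" "\<forall>r. \<bar>r\<bar> < e \<longrightarrow> lin i p r \<in> D" using lin_ev[OF p i] by blast
    have ev0: "eventually (\<lambda>r. lin i p (- r) \<in> D) (nhds 0)"
      unfolding eventually_nhds_metric using e by (auto simp: dist_real_def)
    have ev: "eventually (\<lambda>r. r \<in> UNIV \<longrightarrow> g (lin i q r) = (if h \<in> K then - g (lin i p (- r)) else g (lin i p (- r)))) (nhds 0)"
      using ev0 by (rule eventually_mono) (simp add: lq flipD)
    have dm: "((\<lambda>r. g (lin i p (- r))) has_vector_derivative - pdi i g p) (at 0)"
      by (rule vd_neg_arg[OF dp])
    have "pdi i g q = vector_derivative (\<lambda>r. if h \<in> K then - g (lin i p (- r)) else g (lin i p (- r))) (at 0)"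
      unfolding pdi_def by (rule vector_derivative_cong_eq[OF ev]) auto
    also have "\<dots> = (if h \<in> K then pdi i g p else - pdi i g p)"
    proof (cases "h \<in> K")
      case True
      then show ?thesis using vector_derivative_at[OF has_vector_derivative_minus[OF dm]] by simp
    next
      case False
      then show ?thesis using vector_derivative_at[OF dm] by simp
    qed
    also have "\<dots> = (if h \<in> K' then - pdi i g p else pdi i g p)"
      using ti hu unfolding K'_def symd_def by auto
    finally show ?thesis by (simp add: q_def)
  qed
qed

lemma symd_sub: "K \<subseteq> {1..\<tau>} \<Longrightarrow> h \<in> {1..\<tau>} \<Longrightarrow> symd K h \<subseteq> {1..\<tau>}"
  unfolding symd_def by auto

lemma dbar_alpha_pdi: "dbar_alpha v (t 0) u G = (\<lambda>p. pdi 0 G p - ((-1::real) ^ u) *\<^sub>R (\<Sum>s\<in>{1..t 0}. v s * pdi s G p))"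
  by (auto simp: fun_eq_iff dbar_alpha_def pdi_alpha)

lemma par_dbar_alpha:
  assumes "par K G" and "\<forall>s\<le>t 0. \<forall>p\<in>D. (\<lambda>r. G (lin s p r)) differentiable (at 0)"
  shows "par K (dbar_alpha v (t 0) u G)"
proof -
  have P: "par K (pdi s G)" if "s \<le> t 0" for s
    using par_pdi[OF assms(1), of s] assms(2) that by simp
  show ?thesis unfolding dbar_alpha_pdi
    by (intro par_diff par_scale par_sum par_lmult P) auto
qed

lemma par_pdbeta:
  assumes "par K G" "h \<in> {1..\<tau>}" "\<forall>p\<in>D. (\<lambda>r. G (lin (t 0 + h) p r)) differentiable (at 0)"
  shows "par (symd K h) (pd_beta h G)"
  using par_pdi[OF assms(1), of "t 0 + h"] assms pdi_beta[OF assms(2)] by auto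

lemma stem_dbarT:
  assumes F: "T_stem \<tau> D F" and C: "\<forall>K. K \<subseteq> {1..\<tau>} \<longrightarrow> C1_on v (t 0) \<tau> D (F K)"
  shows "T_stem \<tau> D (dbarT v (t 0) \<tau> F)" "T_stem \<tau> D (dT v (t 0) \<tau> F)"
proof -
  have PF: "par K (F K)" if "K \<subseteq> {1..\<tau>}" for K using F that stem_par by blast
  have A: "par K (dbar_alpha v (t 0) u (F K))" if K: "K \<subseteq> {1..\<tau>}" for K u
  proof (rule par_dbar_alpha[OF PF[OF K]])
    show "\<forall>s\<le>t 0. \<forall>p\<in>D. (\<lambda>r. F K (lin s p r)) differentiable (at 0)"
    proof (intro allI impI ballI)
      fix s p assume "s \<le> t 0" "p \<in> D"
      then show "(\<lambda>r. F K (lin s p r)) differentiable (at 0)" using C1_dif[of "F K" p s] C K by auto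
    qed
  qed
  have B: "par K (pd_beta h (F (symd K h)))" if "K \<subseteq> {1..\<tau>}" "h \<in> {1..\<tau>}" for K h
  proof -
    have S: "symd K h \<subseteq> {1..\<tau>}" using symd_sub that by blast
    have "par (symd (symd K h) h) (pd_beta h (F (symd K h)))"
      using par_pdbeta[OF PF[OF S] that(2) C1_dif_all[of "F (symd K h)" "t 0 + h"]] C S that(2) by auto
    then show ?thesis by (simp add: symd_symd)
  qed
  have e1: "dbarT v (t 0) \<tau> F K = (\<lambda>p. dbar_alpha v (t 0) (card K + 1) (F K) p +
     (\<Sum>h\<in>{1..\<tau>}. ((-1::real) ^ (sigma_par h K + 1)) *\<^sub>R pd_beta h (F (symd K h)) p))" for K
    by (simp add: fun_eq_iff dbarT_def)
  have e2: "dT v (t 0) \<tau> F K = (\<lambda>p. dbar_alpha v (t 0) (card K) (F K) p +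
     (\<Sum>h\<in>{1..\<tau>}. ((-1::real) ^ sigma_par h K) *\<^sub>R pd_beta h (F (symd K h)) p))" for K
    by (simp add: fun_eq_iff dT_def)
  show "T_stem \<tau> D (dbarT v (t 0) \<tau> F)" unfolding stem_par
    by (auto simp only: e1 intro!: par_add par_sum par_scale A B)
  show "T_stem \<tau> D (dT v (t 0) \<tau> F)" unfolding stem_par
    by (auto simp only: e2 intro!: par_add par_sum par_scale A B)
qed

lemma C2_dif2:
  assumes "C2_on v (t 0) \<tau> D G" "p \<in> D" "i \<le> t 0 + \<tau>" "j \<le> t 0 + \<tau>"
  shows "(\<lambda>r. pdi j G (lin i p r)) differentiable (at 0)"
proof (cases "j \<le> t 0")
  case True
  then have "C1_on v (t 0) \<tau> D (pdi j G)" using assms(1) unfolding C2_on_def by (simp add: pdi_alpha)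
  then show ?thesis using C1_dif assms by blast
next
  case False
  then have h: "j - t 0 \<in> {1..\<tau>}" and jj: "j = t 0 + (j - t 0)" using assms by auto
  then have "C1_on v (t 0) \<tau> D (pdi j G)" using assms(1) unfolding C2_on_def by (metis pdi_beta)
  then show ?thesis using C1_dif assms by blast
qed

lemma dbar1_dif:
  assumes "C2_on v (t 0) \<tau> D G" "p \<in> D" "i \<le> t 0 + \<tau>"
  shows "(\<lambda>r. dbar_alpha v (t 0) u G (lin i p r)) differentiable (at 0)"
  unfolding dbar_alpha_pdi
  using assms C2_dif2[OF assms] 
  by (intro differentiable_diff diff_scale differentiable_sum ballI diff_lmult) auto

lemma stem_LapT:
  assumes F: "T_stem \<tau> D F" and C: "\<forall>K. K \<subseteq> {1..\<tau>} \<longrightarrow> C2_on v (t 0) \<tau> D (F K)"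
  shows "T_stem \<tau> D (LapT v (t 0) \<tau> F)"
proof -
  have C1: "C1_on v (t 0) \<tau> D (F K)" if "K \<subseteq> {1..\<tau>}" for K using C that unfolding C2_on_def by blast
  have PF: "par K (F K)" if "K \<subseteq> {1..\<tau>}" for K using F that stem_par by blast
  have A: "par K (dbar_alpha v (t 0) 0 (dbar_alpha v (t 0) 1 (F K)))" if K: "K \<subseteq> {1..\<tau>}" for K
  proof (rule par_dbar_alpha)
    show "par K (dbar_alpha v (t 0) 1 (F K))"
    proof (rule par_dbar_alpha[OF PF[OF K]])
      show "\<forall>s\<le>t 0. \<forall>p\<in>D. (\<lambda>r. F K (lin s p r)) differentiable (at 0)"
      proof (intro allI impI ballI)
        fix s p assume "s \<le> t 0" "p \<in> D"
        then show "(\<lambda>r. F K (lin s p r)) differentiable (at 0)" using C1_dif[of "F K" p s] C1[OF K] by auto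
      qed
    qed
    show "\<forall>s\<le>t 0. \<forall>p\<in>D. (\<lambda>r. dbar_alpha v (t 0) 1 (F K) (lin s p r)) differentiable (at 0)"
      using dbar1_dif C K by auto
  qed
  have B: "par K (pd_beta h (pd_beta h (F K)))" if K: "K \<subseteq> {1..\<tau>}" and h: "h \<in> {1..\<tau>}" for K h
  proof -
    have "par (symd K h) (pd_beta h (F K))"
      using par_pdbeta[OF PF[OF K] h C1_dif_all[OF C1[OF K], of "t 0 + h"]] h by auto
    moreover have "\<forall>p\<in>D. (\<lambda>r. pd_beta h (F K) (lin (t 0 + h) p r)) differentiable (at 0)"
      using C2_dif2[of "F K" _ "t 0 + h" "t 0 + h"] C K h pdi_beta[OF h] by auto
    ultimately have "par (symd (symd K h) h) (pd_beta h (pd_beta h (F K)))"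
      using par_pdbeta h by blast
    then show ?thesis by (simp add: symd_symd)
  qed
  have e: "LapT v (t 0) \<tau> F K = (\<lambda>p. dbar_alpha v (t 0) 0 (dbar_alpha v (t 0) 1 (F K)) p +
     (\<Sum>h\<in>{1..\<tau>}. pd_beta h (pd_beta h (F K)) p))" for K
    by (simp add: fun_eq_iff LapT_def)
  show ?thesis unfolding stem_par
    by (auto simp only: e intro!: par_add par_sum A B)
qed

lemma m1: "((-1::real) ^ n) *\<^sub>R (x::'a) = (-1) ^ n * x"
  by (cases "even n") auto

lemma R1:
  assumes J: "J \<in> torus v t \<tau>"
  shows "(\<Sum>s\<in>{1..t 0}. v s * (\<Sum>K\<in>Pow {1..\<tau>}. JK J K * A s K))
       = (\<Sum>K\<in>Pow {1..\<tau>}. JK J K * ((-1::real) ^ card K *\<^sub>R (\<Sum>s\<in>{1..t 0}. v s * A s K)))"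
proof -
  have trm: "v s * (JK J K * A s K) = JK J K * ((-1::real) ^ card K *\<^sub>R (v s * A s K))"
    if s: "s \<in> {1..t 0}" and K: "K \<in> Pow {1..\<tau>}" for s K
  proof -
    have fK: "finite K" using K finite_subset by auto
    have eqv: "v s * JK J K = (-1) ^ card K * (JK J K * v s)"
    proof (rule JK_anti[OF fK])
      show "\<forall>h\<in>K. v s * J h = - (J h * v s)" using vJ_anti[OF J _ s] K by blast
    qed
    have "v s * (JK J K * A s K) = (v s * JK J K) * A s K" by (simp only: mult.assoc)
    also have "\<dots> = ((-1) ^ card K * (JK J K * v s)) * A s K" by (simp only: eqv)
    also have "\<dots> = ((-1::real) ^ card K) *\<^sub>R (JK J K * (v s * A s K))" by (simp add: m1 mult.assoc)
    finally show ?thesis by simp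
  qed
  have "(\<Sum>s\<in>{1..t 0}. v s * (\<Sum>K\<in>Pow {1..\<tau>}. JK J K * A s K))
      = (\<Sum>s\<in>{1..t 0}. \<Sum>K\<in>Pow {1..\<tau>}. JK J K * ((-1::real) ^ card K *\<^sub>R (v s * A s K)))"
    by (simp add: sum_distrib_left trm)
  also have "\<dots> = (\<Sum>K\<in>Pow {1..\<tau>}. \<Sum>s\<in>{1..t 0}. JK J K * ((-1::real) ^ card K *\<^sub>R (v s * A s K)))"
    by (rule sum.swap)
  also have "\<dots> = (\<Sum>K\<in>Pow {1..\<tau>}. JK J K * ((-1::real) ^ card K *\<^sub>R (\<Sum>s\<in>{1..t 0}. v s * A s K)))"
    by (simp add: sum_distrib_left scaleR_sum_right)
  finally show ?thesis .
qed

lemma reidx: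
  assumes u: "u \<in> {1..\<tau>}"
  shows "(\<Sum>K\<in>Pow {1..\<tau>}. \<phi> (symd K u)) = (\<Sum>K\<in>Pow {1..\<tau>}. (\<phi> K :: 'b::comm_monoid_add))"
  by (rule sum.reindex_bij_witness[of _ "\<lambda>K. symd K u" "\<lambda>K. symd K u"])
     (use u symd_sub in \<open>auto simp: symd_symd\<close>)

lemma R2:
  assumes J: "J \<in> torus v t \<tau>"
  shows "(\<Sum>u\<in>{1..\<tau>}. J u * (\<Sum>K\<in>Pow {1..\<tau>}. JK J K * B u K))
       = (\<Sum>K\<in>Pow {1..\<tau>}. \<Sum>u\<in>{1..\<tau>}. (-1::real) ^ (sigma_par u K + 1) *\<^sub>R (JK J K * B u (symd K u)))"
proof -
  have trm: "J u * (JK J K * B u K) = (-1::real) ^ (sigma_par u (symd K u) + 1) *\<^sub>R (JK J (symd K u) * B u (symd (symd K u) u))"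
    if u: "u \<in> {1..\<tau>}" and K: "K \<in> Pow {1..\<tau>}" for u K
  proof -
    have "J u * (JK J K * B u K) = (J u * JK J K) * B u K" by (simp add: mult.assoc)
    then show ?thesis using J_mult_JK[OF J u] K by (simp add: symd_symd)
  qed
  have "(\<Sum>u\<in>{1..\<tau>}. J u * (\<Sum>K\<in>Pow {1..\<tau>}. JK J K * B u K))
    = (\<Sum>u\<in>{1..\<tau>}. \<Sum>K\<in>Pow {1..\<tau>}. (-1::real) ^ (sigma_par u (symd K u) + 1) *\<^sub>R (JK J (symd K u) * B u (symd (symd K u) u)))"
    by (simp add: sum_distrib_left trm)
  also have "\<dots> = (\<Sum>u\<in>{1..\<tau>}. \<Sum>K\<in>Pow {1..\<tau>}. (-1::real) ^ (sigma_par u K + 1) *\<^sub>R (JK J K * B u (symd K u)))"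
    by (rule sum.cong[OF refl], rule reidx[where \<phi> = "\<lambda>K'. (-1::real) ^ (sigma_par _ K' + 1) *\<^sub>R (JK J K' * B _ (symd K' _))"])
  also have "\<dots> = (\<Sum>K\<in>Pow {1..\<tau>}. \<Sum>u\<in>{1..\<tau>}. (-1::real) ^ (sigma_par u K + 1) *\<^sub>R (JK J K * B u (symd K u)))"
    by (rule sum.swap)
  finally show ?thesis .
qed

lemma frel:
  assumes F: "T_stem \<tau> D F" and fdef: "\<forall>x\<in>OmegaD v t \<tau> D. f x = induced v t \<tau> D F x"
    and J: "J \<in> torus v t \<tau>"
  shows "\<forall>q\<in>D. f (tpoint J \<tau> q) = (\<Sum>K\<in>Pow {1..\<tau>}. JK J K * F K q)"
proof
  fix q assume q: "q \<in> D"
  then have "tpoint J \<tau> q \<in> OmegaD v t \<tau> D" using J unfolding OmegaD_def by blast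
  then show "f (tpoint J \<tau> q) = (\<Sum>K\<in>Pow {1..\<tau>}. JK J K * F K q)" using fdef IND[OF F q J] by simp
qed

lemma sd_alpha_f:
  assumes J: "J \<in> torus v t \<tau>"
    and grel: "\<forall>q\<in>D. g (tpoint J \<tau> q) = (\<Sum>K\<in>Pow {1..\<tau>}. JK J K * G K q)"
    and C: "\<forall>K. K \<subseteq> {1..\<tau>} \<longrightarrow> C1_on v (t 0) \<tau> D (G K)"
    and p: "p \<in> D" and s: "s \<le> t 0"
  shows "sd (v s) g (tpoint J \<tau> p) = (\<Sum>K\<in>Pow {1..\<tau>}. JK J K * pd_alpha (v s) (G K) p)"
  using SD[OF J grel p, of s] C1_dif[OF _ p, of _ s] C s by (auto simp: wJ_def pdi_alpha)

lemma sd_beta_f: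
  assumes J: "J \<in> torus v t \<tau>"
    and grel: "\<forall>q\<in>D. g (tpoint J \<tau> q) = (\<Sum>K\<in>Pow {1..\<tau>}. JK J K * G K q)"
    and C: "\<forall>K. K \<subseteq> {1..\<tau>} \<longrightarrow> C1_on v (t 0) \<tau> D (G K)"
    and p: "p \<in> D" and u: "u \<in> {1..\<tau>}"
  shows "sd (J u) g (tpoint J \<tau> p) = (\<Sum>K\<in>Pow {1..\<tau>}. JK J K * pd_beta u (G K) p)"
proof -
  have w: "wJ v (t 0) J (t 0 + u) = J u" using u by (simp add: wJ_def)
  show ?thesis using SD[OF J grel p, of "t 0 + u"] C1_dif[OF _ p, of _ "t 0 + u"] C u w pdi_beta[OF u]
    by auto
qed

lemma part12:
  assumes F: "T_stem \<tau> D F" and C: "\<forall>K. K \<subseteq> {1..\<tau>} \<longrightarrow> C1_on v (t 0) \<tau> D (F K)"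
    and fdef: "\<forall>x\<in>OmegaD v t \<tau> D. f x = induced v t \<tau> D F x"
    and J: "J \<in> torus v t \<tau>" and y: "y \<in> OmegaD v t \<tau> D \<inter> RJ v (t 0) \<tau> J"
  shows "induced v t \<tau> D (dbarT v (t 0) \<tau> F) y = dbarJ v (t 0) \<tau> J f y \<and>
         induced v t \<tau> D (dT v (t 0) \<tau> F) y = dJ v (t 0) \<tau> J f y"
proof -
  obtain p where p: "p \<in> D" and yp: "y = tpoint J \<tau> p" using rep[OF J] y by blast
  note fr = frel[OF F fdef J]
  define A where "A s K = pd_alpha (v s) (F K) p" for s K
  define B where "B u K = pd_beta u (F K) p" for u K
  have sa: "sd (v s) f y = (\<Sum>K\<in>Pow {1..\<tau>}. JK J K * A s K)" if "s \<le> t 0" for s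
    using sd_alpha_f[OF J fr C p that] yp unfolding A_def by simp
  have sb: "sd (J u) f y = (\<Sum>K\<in>Pow {1..\<tau>}. JK J K * B u K)" if "u \<in> {1..\<tau>}" for u
    using sd_beta_f[OF J fr C p that] yp unfolding B_def by simp
  have SA: "(\<Sum>s\<in>{1..t 0}. v s * sd (v s) f y) = (\<Sum>K\<in>Pow {1..\<tau>}. JK J K * ((-1::real) ^ card K *\<^sub>R (\<Sum>s\<in>{1..t 0}. v s * A s K)))"
    using R1[OF J, of A] sa by simp
  have SB: "(\<Sum>u\<in>{1..\<tau>}. J u * sd (J u) f y) = (\<Sum>K\<in>Pow {1..\<tau>}. \<Sum>u\<in>{1..\<tau>}. (-1::real) ^ (sigma_par u K + 1) *\<^sub>R (JK J K * B u (symd K u)))"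
    using R2[OF J, of B] sb by simp
  have S0: "sd (v 0) f y = (\<Sum>K\<in>Pow {1..\<tau>}. JK J K * A 0 K)" using sa by simp
  have sum0: "(\<Sum>s\<in>{0..t 0}. v s * sd (v s) f y) = v 0 * sd (v 0) f y + (\<Sum>s\<in>{1..t 0}. v s * sd (v s) f y)"
    by (simp add: sum.atLeast_Suc_atMost)
  have L1: "induced v t \<tau> D (dbarT v (t 0) \<tau> F) y = (\<Sum>K\<in>Pow {1..\<tau>}. JK J K * dbarT v (t 0) \<tau> F K p)"
    using IND[OF stem_dbarT(1)[OF F C] p J] yp by simp
  have L2: "induced v t \<tau> D (dT v (t 0) \<tau> F) y = (\<Sum>K\<in>Pow {1..\<tau>}. JK J K * dT v (t 0) \<tau> F K p)"
    using IND[OF stem_dbarT(2)[OF F C] p J] yp by simp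
  have E1: "JK J K * dbarT v (t 0) \<tau> F K p = JK J K * A 0 K + JK J K * ((-1::real) ^ card K *\<^sub>R (\<Sum>s\<in>{1..t 0}. v s * A s K))
      + (\<Sum>u\<in>{1..\<tau>}. (-1::real) ^ (sigma_par u K + 1) *\<^sub>R (JK J K * B u (symd K u)))" for K
    unfolding dbarT_def dbar_alpha_def A_def B_def
    by (simp add: distrib_left right_diff_distrib sum_distrib_left)
  have E2: "JK J K * dT v (t 0) \<tau> F K p = JK J K * A 0 K - JK J K * ((-1::real) ^ card K *\<^sub>R (\<Sum>s\<in>{1..t 0}. v s * A s K))
      - (\<Sum>u\<in>{1..\<tau>}. (-1::real) ^ (sigma_par u K + 1) *\<^sub>R (JK J K * B u (symd K u)))" for K
    unfolding dT_def dbar_alpha_def A_def B_def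
    by (simp add: distrib_left right_diff_distrib sum_distrib_left sum_negf)
  show ?thesis
  proof
    show "induced v t \<tau> D (dbarT v (t 0) \<tau> F) y = dbarJ v (t 0) \<tau> J f y"
      unfolding L1 dbarJ_def sum0 SA SB S0 E1 by (simp add: sum.distrib v0)
    show "induced v t \<tau> D (dT v (t 0) \<tau> F) y = dJ v (t 0) \<tau> J f y"
      unfolding L2 dJ_def SA SB S0 E2 by (simp add: sum_subtractf)
  qed
qed

lemma D_open_alpha:
  assumes p: "p \<in> D"
  shows "\<exists>e>0. \<forall>z\<in>span (v ` {0..t 0}). norm z < e \<longrightarrow> (fst p + z, snd p) \<in> D"
proof -
  obtain T where T: "open T" "D = (span (v ` {0..t 0}) \<times> {\<beta>. \<forall>h. h \<notin> {1..\<tau>} \<longrightarrow> \<beta> h = 0}) \<inter> T"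
    using Ddom unfolding T_domain_def openin_open by blast
  have c: "continuous (at 0) (\<lambda>z. (fst p + z, snd p))" by (intro continuous_intros)
  have "(\<lambda>z. (fst p + z, snd p)) 0 \<in> T" using p T(2) by auto
  then obtain S where S: "open S" "0 \<in> S" "\<forall>x\<in>S. (fst p + x, snd p) \<in> T"
    using c T(1) unfolding continuous_at_open by blast
  then obtain e where e: "e > 0" "ball 0 e \<subseteq> S" using open_contains_ball by blast
  have "(fst p + z, snd p) \<in> D" if "z \<in> span (v ` {0..t 0})" "norm z < e" for z
  proof -
    have "z \<in> S" using e that by auto
    moreover have "fst p + z \<in> span (v ` {0..t 0})" using Dsub[OF p] that by (intro span_add) auto
    ultimately show ?thesis using S(3) Dsub[OF p] T(2) by auto
  qed
  then show ?thesis using e(1) by blast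
qed

lemma pa_has:
  assumes "C1_on v (t 0) \<tau> D H" "q \<in> D" "s \<le> t 0"
  shows "((\<lambda>r. H (fst q + r *\<^sub>R v s, snd q)) has_vector_derivative pd_alpha (v s) H q) (at 0)"
  using assms unfolding C1_on_def pd_alpha_def using vector_derivative_works by blast

lemma cont_P:
  fixes g :: "'a \<times> (nat \<Rightarrow> real) \<Rightarrow> 'c::real_normed_vector"
  assumes cg: "continuous_on D g" and e: "e > 0"
    and inD: "\<forall>x y. \<bar>x\<bar> < e \<longrightarrow> \<bar>y\<bar> < e \<longrightarrow> (\<alpha> + x *\<^sub>R a + y *\<^sub>R b, \<beta>) \<in> D"
    and ep: "\<epsilon> > 0"
  shows "\<exists>\<delta>>0. \<forall>x y. \<bar>x\<bar> < \<delta> \<longrightarrow> \<bar>y\<bar> < \<delta> \<longrightarrow>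
      norm (g (\<alpha> + x *\<^sub>R a + y *\<^sub>R b, \<beta>) - g (\<alpha> + 0 *\<^sub>R a + 0 *\<^sub>R b, \<beta>)) \<le> \<epsilon>"
proof -
  define Sq where "Sq = {z::real \<times> real. \<bar>fst z\<bar> < e \<and> \<bar>snd z\<bar> < e}"
  have cP: "continuous_on Sq (\<lambda>z. (\<alpha> + fst z *\<^sub>R a + snd z *\<^sub>R b, \<beta>))"
    by (intro continuous_intros)
  have sub: "(\<lambda>z. (\<alpha> + fst z *\<^sub>R a + snd z *\<^sub>R b, \<beta>)) ` Sq \<subseteq> D" using inD unfolding Sq_def by auto
  have cc: "continuous_on Sq (\<lambda>z. g (\<alpha> + fst z *\<^sub>R a + snd z *\<^sub>R b, \<beta>))"
    by (rule continuous_on_compose2[OF cg cP sub])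
  have z0: "(0, 0) \<in> Sq" using e unfolding Sq_def by auto
  obtain d where d: "d > 0" "\<forall>z\<in>Sq. dist z (0, 0) < d \<longrightarrow>
      dist (g (\<alpha> + fst z *\<^sub>R a + snd z *\<^sub>R b, \<beta>)) (g (\<alpha> + fst (0::real,0::real) *\<^sub>R a + snd (0::real,0::real) *\<^sub>R b, \<beta>)) < \<epsilon>"
    using cc z0 ep unfolding continuous_on_iff by blast
  define \<delta> where "\<delta> = min e (d / 2)"
  have "\<delta> > 0" using e d unfolding \<delta>_def by auto
  moreover have "norm (g (\<alpha> + x *\<^sub>R a + y *\<^sub>R b, \<beta>) - g (\<alpha> + 0 *\<^sub>R a + 0 *\<^sub>R b, \<beta>)) \<le> \<epsilon>"
    if "\<bar>x\<bar> < \<delta>" "\<bar>y\<bar> < \<delta>" for x y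
  proof -
    have inS: "(x, y) \<in> Sq" using that unfolding Sq_def \<delta>_def by auto
    have "dist (x, y) (0, 0) \<le> norm x + norm y" using norm_Pair_le[of x y] by (simp add: dist_norm)
    also have "\<dots> < d" using that unfolding \<delta>_def by auto
    finally have "dist (x, y) (0, 0) < d" .
    then show ?thesis using d(2) inS by (auto simp: dist_norm less_imp_le)
  qed
  ultimately show "\<exists>\<delta>>0. \<forall>x y. \<bar>x\<bar> < \<delta> \<longrightarrow> \<bar>y\<bar> < \<delta> \<longrightarrow>
      norm (g (\<alpha> + x *\<^sub>R a + y *\<^sub>R b, \<beta>) - g (\<alpha> + 0 *\<^sub>R a + 0 *\<^sub>R b, \<beta>)) \<le> \<epsilon>" by blast
qed

lemma schwarz:
  assumes C2: "C2_on v (t 0) \<tau> D G" and p: "p \<in> D" and i: "i \<le> t 0" and j: "j \<le> t 0"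
  shows "pd_alpha (v j) (pd_alpha (v i) G) p = pd_alpha (v i) (pd_alpha (v j) G) p"
proof -
  define a where "a = v i"
  define b where "b = v j"
  have C1G: "C1_on v (t 0) \<tau> D G" and C1a: "C1_on v (t 0) \<tau> D (pd_alpha a G)" and C1b: "C1_on v (t 0) \<tau> D (pd_alpha b G)"
    using C2 i j unfolding C2_on_def a_def b_def by auto
  have na: "norm a = 1" and nb: "norm b = 1"
    using vorth[of i i] vorth[of j j] i j t0_le_N unfolding a_def b_def by (auto simp: norm_eq_sqrt_inner)
  have sa: "a \<in> span (v ` {0..t 0})" and sb: "b \<in> span (v ` {0..t 0})"
    using i j unfolding a_def b_def by (auto intro: span_base)
  obtain e0 where e0: "e0 > 0" "\<forall>z\<in>span (v ` {0..t 0}). norm z < e0 \<longrightarrow> (fst p + z, snd p) \<in> D"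
    using D_open_alpha[OF p] by blast
  define e where "e = e0 / 2"
  have e: "e > 0" using e0 unfolding e_def by auto
  define P where "P x y = (fst p + x *\<^sub>R a + y *\<^sub>R b, snd p)" for x y
  have inD: "(fst p + x *\<^sub>R a + y *\<^sub>R b, snd p) \<in> D" if "\<bar>x\<bar> < e" "\<bar>y\<bar> < e" for x y
  proof -
    have z: "x *\<^sub>R a + y *\<^sub>R b \<in> span (v ` {0..t 0})" using sa sb by (intro span_add span_scale)
    have "norm (x *\<^sub>R a + y *\<^sub>R b) \<le> \<bar>x\<bar> + \<bar>y\<bar>"
      using norm_triangle_ineq[of "x *\<^sub>R a" "y *\<^sub>R b"] na nb by simp
    also have "\<dots> < e0" using that unfolding e_def by auto
    finally show ?thesis using e0(2) z by (simp add: add.assoc)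
  qed
  have inD': "\<forall>x y. \<bar>x\<bar> < e \<longrightarrow> \<bar>y\<bar> < e \<longrightarrow> (fst p + x *\<^sub>R a + y *\<^sub>R b, snd p) \<in> D"
    using inD by blast
  have PD: "P x y \<in> D" if "\<bar>x\<bar> < e" "\<bar>y\<bar> < e" for x y using inD[OF that] unfolding P_def .
  have shx: "(\<lambda>r. H (P (x + r) y)) = (\<lambda>r. H (fst (P x y) + r *\<^sub>R a, snd (P x y)))" for H x y
    unfolding P_def by (auto simp: fun_eq_iff algebra_simps)
  have shy: "(\<lambda>r. H (P x (y + r))) = (\<lambda>r. H (fst (P x y) + r *\<^sub>R b, snd (P x y)))" for H x y
    unfolding P_def by (auto simp: fun_eq_iff algebra_simps)
  have hx: "((\<lambda>r. H (P r y)) has_vector_derivative pd_alpha a H (P x y)) (at x)"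
    if "C1_on v (t 0) \<tau> D H" "\<bar>x\<bar> < e" "\<bar>y\<bar> < e" for H x y
  proof -
    have "((\<lambda>r. H (P (x + r) y)) has_vector_derivative pd_alpha a H (P x y)) (at 0)"
      unfolding shx a_def by (rule pa_has[OF that(1) PD[OF that(2,3)] i])
    then show ?thesis by (rule vd_shift)
  qed
  have hy: "((\<lambda>r. H (P x r)) has_vector_derivative pd_alpha b H (P x y)) (at y)"
    if "C1_on v (t 0) \<tau> D H" "\<bar>x\<bar> < e" "\<bar>y\<bar> < e" for H x y
  proof -
    have "((\<lambda>r. H (P x (y + r))) has_vector_derivative pd_alpha b H (P x y)) (at 0)"
      unfolding shy b_def by (rule pa_has[OF that(1) PD[OF that(2,3)] j])
    then show ?thesis by (rule vd_shift)
  qed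
  have cab: "continuous_on D (pd_alpha b (pd_alpha a G))" using C1a j unfolding C1_on_def b_def by auto
  have cba: "continuous_on D (pd_alpha a (pd_alpha b G))" using C1b i unfolding C1_on_def a_def by auto
  have "(\<lambda>x y. pd_alpha b (pd_alpha a G) (P x y)) 0 0 = (\<lambda>x y. pd_alpha a (pd_alpha b G) (P x y)) 0 0"
  proof (rule schwarz_core[OF e, where \<phi> = "\<lambda>x y. G (P x y)" and \<phi>x = "\<lambda>x y. pd_alpha a G (P x y)"
        and \<phi>y = "\<lambda>x y. pd_alpha b G (P x y)" and \<phi>xy = "\<lambda>x y. pd_alpha b (pd_alpha a G) (P x y)"
        and \<phi>yx = "\<lambda>x y. pd_alpha a (pd_alpha b G) (P x y)"])
    show "((\<lambda>r. G (P r y)) has_vector_derivative pd_alpha a G (P x y)) (at x)" if "\<bar>x\<bar> < e" "\<bar>y\<bar> < e" for x y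
      using hx[OF C1G that] .
    show "((\<lambda>r. pd_alpha a G (P x r)) has_vector_derivative pd_alpha b (pd_alpha a G) (P x y)) (at y)" if "\<bar>x\<bar> < e" "\<bar>y\<bar> < e" for x y
      using hy[OF C1a that] .
    show "((\<lambda>r. G (P x r)) has_vector_derivative pd_alpha b G (P x y)) (at y)" if "\<bar>x\<bar> < e" "\<bar>y\<bar> < e" for x y
      using hy[OF C1G that] .
    show "((\<lambda>r. pd_alpha b G (P r y)) has_vector_derivative pd_alpha a (pd_alpha b G) (P x y)) (at x)" if "\<bar>x\<bar> < e" "\<bar>y\<bar> < e" for x y
      using hx[OF C1b that] .
    show "\<exists>\<delta>>0. \<forall>x y. \<bar>x\<bar> < \<delta> \<longrightarrow> \<bar>y\<bar> < \<delta> \<longrightarrow> norm (pd_alpha b (pd_alpha a G) (P x y) - pd_alpha b (pd_alpha a G) (P 0 0)) \<le> \<epsilon>"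
      if "\<epsilon> > 0" for \<epsilon>
      using cont_P[OF cab e inD' that] unfolding P_def by simp
    show "\<exists>\<delta>>0. \<forall>x y. \<bar>x\<bar> < \<delta> \<longrightarrow> \<bar>y\<bar> < \<delta> \<longrightarrow> norm (pd_alpha a (pd_alpha b G) (P x y) - pd_alpha a (pd_alpha b G) (P 0 0)) \<le> \<epsilon>"
      if "\<epsilon> > 0" for \<epsilon>
      using cont_P[OF cba e inD' that] unfolding P_def by simp
  qed
  moreover have "P 0 0 = p" unfolding P_def by simp
  ultimately show ?thesis unfolding a_def b_def by simp
qed

lemma anti_sum:
  assumes Msym: "\<And>r s. r \<in> {1..t 0} \<Longrightarrow> s \<in> {1..t 0} \<Longrightarrow> M r s = M s r"
  shows "(\<Sum>r\<in>{1..t 0}. \<Sum>s\<in>{1..t 0}. v r * (v s * M r s)) = - (\<Sum>r\<in>{1..t 0}. M r r)"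
proof -
  let ?Q = "(\<Sum>r\<in>{1..t 0}. \<Sum>s\<in>{1..t 0}. v r * (v s * M r s))"
  have Q2: "?Q = (\<Sum>r\<in>{1..t 0}. \<Sum>s\<in>{1..t 0}. v s * (v r * M r s))"
  proof -
    have "?Q = (\<Sum>r\<in>{1..t 0}. \<Sum>s\<in>{1..t 0}. v s * (v r * M s r))" by (rule sum.swap)
    also have "\<dots> = (\<Sum>r\<in>{1..t 0}. \<Sum>s\<in>{1..t 0}. v s * (v r * M r s))"
    proof (intro sum.cong refl)
      fix r s assume rs: "r \<in> {1..t 0}" "s \<in> {1..t 0}"
      show "v s * (v r * M s r) = v s * (v r * M r s)" using Msym[OF rs(2) rs(1)] by simp
    qed
    finally show ?thesis .
  qed
  have c: "v r * v s + v s * v r = (if r = s then -2 else 0)" if "r \<in> {1..t 0}" "s \<in> {1..t 0}" for r s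
  proof (cases "r = s")
    case True
    have rN: "r \<in> {1..N}" using that t0_le_N by auto
    have "v r * v r = -1" using vsq[OF rN] .
    then show ?thesis using True by simp
  next
    case False
    have rN: "r \<in> {1..N}" "s \<in> {1..N}" using that t0_le_N by auto
    have "v r * v s = - (v s * v r)" using vanti[OF rN False] .
    then show ?thesis using False by simp
  qed
  let ?R = "(\<Sum>r\<in>{1..t 0}. \<Sum>s\<in>{1..t 0}. v s * (v r * M r s))"
  let ?S = "(\<Sum>r\<in>{1..t 0}. M r r)"
  have "?Q + ?Q = ?Q + ?R" by (simp only: Q2[symmetric])
  also have "\<dots> = (\<Sum>r\<in>{1..t 0}. \<Sum>s\<in>{1..t 0}. (v r * v s + v s * v r) * M r s)"
    by (simp only: sum.distrib distrib_right mult.assoc)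
  also have "\<dots> = (\<Sum>r\<in>{1..t 0}. \<Sum>s\<in>{1..t 0}. if r = s then -2 * M r s else 0)"
  proof (intro sum.cong refl)
    fix r s assume "r \<in> {1..t 0}" "s \<in> {1..t 0}"
    then show "(v r * v s + v s * v r) * M r s = (if r = s then -2 * M r s else 0)" using c by simp
  qed
  also have "\<dots> = (\<Sum>r\<in>{1..t 0}. -2 * M r r)"
    by (intro sum.cong refl) (simp only: sum.delta' finite_atLeastAtMost if_True)
  also have "\<dots> = -2 * ?S" by (simp only: sum_distrib_left)
  also have "\<dots> = - ?S + - ?S" by (simp only: mult_minus_left mult_2 minus_add_distrib)
  finally have QQ: "?Q + ?Q = - ?S + - ?S" .
  have "2 *\<^sub>R ?Q = 2 *\<^sub>R (- ?S)" by (simp only: scaleR_2 QQ)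
  then have "?Q = - ?S \<or> (2::real) = 0" by (simp only: scaleR_cancel_left)
  then show ?thesis by simp
qed

lemma lap_alpha:
  fixes G :: "'a \<times> (nat \<Rightarrow> real) \<Rightarrow> 'a"
  assumes C2: "C2_on v (t 0) \<tau> D G" and p: "p \<in> D"
  shows "dbar_alpha v (t 0) 0 (dbar_alpha v (t 0) 1 G) p = (\<Sum>s\<in>{0..t 0}. pd_alpha (v s) (pd_alpha (v s) G) p)"
proof -
  define M where "M r s = pdi r (pdi s G) p" for r s
  have Msym: "M r s = M s r" if "r \<le> t 0" "s \<le> t 0" for r s
    using schwarz[OF C2 p that(2) that(1)] that unfolding M_def by (simp add: pdi_alpha)
  define H where "H = dbar_alpha v (t 0) 1 G"
  have Heq: "H = (\<lambda>q. \<Sum>s\<in>{0..t 0}. v s * pdi s G q)"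
    unfolding H_def dbar_alpha_pdi by (auto simp: fun_eq_iff sum.atLeast_Suc_atMost v0)
  have dH: "pdi r H p = (\<Sum>s\<in>{0..t 0}. v s * M r s)" if r: "r \<le> t 0" for r
  proof -
    have "((\<lambda>x. \<Sum>s\<in>{0..t 0}. v s * pdi s G (lin r p x)) has_vector_derivative (\<Sum>s\<in>{0..t 0}. v s * M r s)) (at 0)"
    proof (intro has_vector_derivative_sum lmult_vd)
      fix s assume s: "s \<in> {0..t 0}"
      have "(\<lambda>x. pdi s G (lin r p x)) differentiable (at 0)" using C2_dif2[OF C2 p, of r s] r s by auto
      then show "((\<lambda>x. pdi s G (lin r p x)) has_vector_derivative M r s) (at 0)"
        unfolding M_def pdi_def[of r] using vector_derivative_works by blast
    qed
    then have V: "vector_derivative (\<lambda>x. \<Sum>s\<in>{0..t 0}. v s * pdi s G (lin r p x)) (at 0) = (\<Sum>s\<in>{0..t 0}. v s * M r s)"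
      by (rule vector_derivative_at)
    have "pdi r H p = vector_derivative (\<lambda>x. H (lin r p x)) (at 0)" by (rule pdi_def)
    also have "\<dots> = vector_derivative (\<lambda>x. \<Sum>s\<in>{0..t 0}. v s * pdi s G (lin r p x)) (at 0)"
      by (simp only: Heq)
    finally show ?thesis using V by simp
  qed
  have "dbar_alpha v (t 0) 0 H p = pdi 0 H p - (\<Sum>r\<in>{1..t 0}. v r * pdi r H p)"
    unfolding dbar_alpha_pdi by simp
  also have "\<dots> = (\<Sum>s\<in>{0..t 0}. v s * M 0 s) - (\<Sum>r\<in>{1..t 0}. v r * (\<Sum>s\<in>{0..t 0}. v s * M r s))"
    using dH by simp
  also have "\<dots> = (M 0 0 + (\<Sum>s\<in>{1..t 0}. v s * M 0 s)) - ((\<Sum>r\<in>{1..t 0}. v r * M r 0) + (\<Sum>r\<in>{1..t 0}. \<Sum>s\<in>{1..t 0}. v r * (v s * M r s)))"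
    by (simp add: sum.atLeast_Suc_atMost v0 distrib_left sum.distrib sum_distrib_left)
  also have "(\<Sum>s\<in>{1..t 0}. v s * M 0 s) = (\<Sum>r\<in>{1..t 0}. v r * M r 0)"
    by (intro sum.cong refl) (simp add: Msym)
  also have "(\<Sum>r\<in>{1..t 0}. \<Sum>s\<in>{1..t 0}. v r * (v s * M r s)) = - (\<Sum>r\<in>{1..t 0}. M r r)"
    by (rule anti_sum) (simp add: Msym)
  also have "M 0 0 + (\<Sum>r\<in>{1..t 0}. v r * M r 0) - ((\<Sum>r\<in>{1..t 0}. v r * M r 0) + - (\<Sum>r\<in>{1..t 0}. M r r))
      = (\<Sum>s\<in>{0..t 0}. M s s)" by (simp add: sum.atLeast_Suc_atMost)
  finally show ?thesis unfolding H_def M_def by (simp add: pdi_alpha)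
qed

lemma part3:
  assumes F: "T_stem \<tau> D F" and C: "\<forall>K. K \<subseteq> {1..\<tau>} \<longrightarrow> C2_on v (t 0) \<tau> D (F K)"
    and fdef: "\<forall>x\<in>OmegaD v t \<tau> D. f x = induced v t \<tau> D F x"
    and J: "J \<in> torus v t \<tau>" and y: "y \<in> OmegaD v t \<tau> D \<inter> RJ v (t 0) \<tau> J"
  shows "induced v t \<tau> D (LapT v (t 0) \<tau> F) y = LapJ v (t 0) \<tau> J f y"
proof -
  have C1: "C1_on v (t 0) \<tau> D (F K)" if "K \<subseteq> {1..\<tau>}" for K using C that unfolding C2_on_def by blast
  obtain p where p: "p \<in> D" and yp: "y = tpoint J \<tau> p" using rep[OF J] y by blast
  note fr = frel[OF F fdef J]
  have g1: "\<forall>q\<in>D. sd (wJ v (t 0) J i) f (tpoint J \<tau> q) = (\<Sum>K\<in>Pow {1..\<tau>}. JK J K * pdi i (F K) q)"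
    if i: "i \<le> t 0 + \<tau>" for i
  proof
    fix q assume q: "q \<in> D"
    show "sd (wJ v (t 0) J i) f (tpoint J \<tau> q) = (\<Sum>K\<in>Pow {1..\<tau>}. JK J K * pdi i (F K) q)"
      using SD[OF J fr q i] C1_dif[OF C1 q i] by auto
  qed
  have g2: "sd (wJ v (t 0) J i) (sd (wJ v (t 0) J i) f) y = (\<Sum>K\<in>Pow {1..\<tau>}. JK J K * pdi i (pdi i (F K)) p)"
    if i: "i \<le> t 0 + \<tau>" for i
    using SD[OF J g1[OF i] p i] C2_dif2[OF _ p i i] C yp by auto
  define X where "X K i = pdi i (pdi i (F K)) p" for K i
  have "LapJ v (t 0) \<tau> J f y = (\<Sum>i\<in>{0..t 0 + \<tau>}. \<Sum>K\<in>Pow {1..\<tau>}. JK J K * X K i)"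
    unfolding LapJ_def X_def by (intro sum.cong refl) (use g2 in auto)
  also have "\<dots> = (\<Sum>K\<in>Pow {1..\<tau>}. JK J K * (\<Sum>i\<in>{0..t 0 + \<tau>}. X K i))"
    by (subst sum.swap) (simp add: sum_distrib_left)
  also have "\<dots> = (\<Sum>K\<in>Pow {1..\<tau>}. JK J K * LapT v (t 0) \<tau> F K p)"
  proof (intro sum.cong refl arg_cong[where f = "\<lambda>z. JK J _ * z"])
    fix K assume K: "K \<in> Pow {1..\<tau>}"
    have "(\<Sum>i\<in>{0..t 0 + \<tau>}. X K i) = (\<Sum>i\<in>{0..t 0}. X K i) + (\<Sum>h\<in>{1..\<tau>}. X K (t 0 + h))"
      by (rule sum_split0)
    also have "(\<Sum>i\<in>{0..t 0}. X K i) = (\<Sum>s\<in>{0..t 0}. pd_alpha (v s) (pd_alpha (v s) (F K)) p)"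
      unfolding X_def by (intro sum.cong refl) (simp add: pdi_alpha)
    also have "\<dots> = dbar_alpha v (t 0) 0 (dbar_alpha v (t 0) 1 (F K)) p"
      using lap_alpha[OF _ p, of "F K"] C K by auto
    also have "(\<Sum>h\<in>{1..\<tau>}. X K (t 0 + h)) = (\<Sum>h\<in>{1..\<tau>}. pd_beta h (pd_beta h (F K)) p)"
      unfolding X_def by (intro sum.cong refl) (simp add: pdi_beta)
    finally show "(\<Sum>i\<in>{0..t 0 + \<tau>}. X K i) = LapT v (t 0) \<tau> F K p" by (simp add: LapT_def)
  qed
  also have "\<dots> = induced v t \<tau> D (LapT v (t 0) \<tau> F) y"
    using IND[OF stem_LapT[OF F C] p J] yp by simp
  finally show ?thesis by simp
qed

end

theorem theorem3p9:
  fixes cj :: "'a::{real_algebra_1, euclidean_space} \<Rightarrow> 'a"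
    and N :: nat and v :: "nat \<Rightarrow> 'a"
    and \<tau> :: nat and t :: "nat \<Rightarrow> nat"
    and D :: "('a \<times> (nat \<Rightarrow> real)) set"
    and F :: "nat set \<Rightarrow> 'a \<times> (nat \<Rightarrow> real) \<Rightarrow> 'a"
    and f :: "'a \<Rightarrow> 'a" and J :: "nat \<Rightarrow> 'a"
  assumes inv: "star_involution cj"
    and SA_ne: "SA cj \<noteq> {}"
    and N1: "N \<ge> 1"
    and v0: "v 0 = 1"
    and vS: "\<forall>s\<in>{1..N}. v s \<in> SA cj"
    and vanti: "\<forall>s\<in>{1..N}. \<forall>r\<in>{1..N}. s \<noteq> r \<longrightarrow> v s * v r = - (v r * v s)"
    and vorth: "\<forall>s\<le>N. \<forall>r\<le>N. inner (v s) (v r) = (if s = r then 1 else 0)"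
    and Vslice: "\<forall>x\<in>span (v ` {0..N}). \<exists>I\<in>SA cj. \<exists>a b::real. x = a *\<^sub>R 1 + b *\<^sub>R I"
    and tmono: "\<forall>h<\<tau>. t h < t (Suc h)"
    and tN: "t \<tau> = N"
    and Ddom: "T_domain v (t 0) \<tau> D"
    and Fstem: "T_stem \<tau> D F"
    and FC1: "\<forall>K. K \<subseteq> {1..\<tau>} \<longrightarrow> C1_on v (t 0) \<tau> D (F K)"
    and fdef: "\<forall>x\<in>OmegaD v t \<tau> D. f x = induced v t \<tau> D F x"
    and Jtor: "J \<in> torus v t \<tau>"
  shows "(\<forall>y\<in>OmegaD v t \<tau> D \<inter> RJ v (t 0) \<tau> J.
            induced v t \<tau> D (dbarT v (t 0) \<tau> F) y = dbarJ v (t 0) \<tau> J f y) \<and>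
         (\<forall>y\<in>OmegaD v t \<tau> D \<inter> RJ v (t 0) \<tau> J.
            induced v t \<tau> D (dT v (t 0) \<tau> F) y = dJ v (t 0) \<tau> J f y) \<and>
         ((\<forall>K. K \<subseteq> {1..\<tau>} \<longrightarrow> C2_on v (t 0) \<tau> D (F K)) \<longrightarrow>
           (\<forall>y\<in>OmegaD v t \<tau> D \<inter> RJ v (t 0) \<tau> J.
              induced v t \<tau> D (LapT v (t 0) \<tau> F) y = LapJ v (t 0) \<tau> J f y))"
proof -
  have vsq: "v s * v s = -1" if "s \<in> {1..N}" for s
  proof -
    have "v s + cj (v s) = 0" "v s * cj (v s) = 1" using vS that unfolding SA_def by auto
    then have "v s * (- v s) = 1" by (metis add.commute add_eq_0_iff)
    then show ?thesis by (metis minus_mult_right minus_equation_iff)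
  qed
  interpret S: stp v N \<tau> t D
  proof
    show "v 0 = 1" by (rule v0)
    show "\<And>s. s \<in> {1..N} \<Longrightarrow> v s * v s = -1" by (rule vsq)
    show "\<And>s r. s \<in> {1..N} \<Longrightarrow> r \<in> {1..N} \<Longrightarrow> s \<noteq> r \<Longrightarrow> v s * v r = - (v r * v s)"
      using vanti by blast
    show "\<And>s r. s \<le> N \<Longrightarrow> r \<le> N \<Longrightarrow> inner (v s) (v r) = (if s = r then 1 else 0)"
      using vorth by blast
    show "\<forall>h<\<tau>. t h < t (Suc h)" by (rule tmono)
    show "t \<tau> = N" by (rule tN)
    show "T_domain v (t 0) \<tau> D" by (rule Ddom)
  qed
  show ?thesis
  proof (intro conjI ballI impI)
    fix y assume y: "y \<in> OmegaD v t \<tau> D \<inter> RJ v (t 0) \<tau> J"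
    show "induced v t \<tau> D (dbarT v (t 0) \<tau> F) y = dbarJ v (t 0) \<tau> J f y"
      using S.part12[OF Fstem FC1 fdef Jtor y] by blast
  next
    fix y assume y: "y \<in> OmegaD v t \<tau> D \<inter> RJ v (t 0) \<tau> J"
    show "induced v t \<tau> D (dT v (t 0) \<tau> F) y = dJ v (t 0) \<tau> J f y"
      using S.part12[OF Fstem FC1 fdef Jtor y] by blast
  next
    fix y assume C2: "\<forall>K. K \<subseteq> {1..\<tau>} \<longrightarrow> C2_on v (t 0) \<tau> D (F K)"
      and y: "y \<in> OmegaD v t \<tau> D \<inter> RJ v (t 0) \<tau> J"
    show "induced v t \<tau> D (LapT v (t 0) \<tau> F) y = LapJ v (t 0) \<tau> J f y"
      using S.part3[OF Fstem C2 fdef Jtor y] .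
  qed
qed

end
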